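(* Let $A=\mathbb{F}_q[T]$, $\ell\in\mathbb{Z}_{\ge0}$, and $\omega\in C_\infty\smallsetminus K_\infty$ with $|\omega|=|\omega|_i=q^\ell$. Put $\Lambda=A\omega+A$ and $\Delta(\omega)=\Delta_T(\Lambda)$. Then (i) $\log\Delta(\omega)=q^2+q-q^{\ell+1}$. (ii) Let $n\in A$ be nonconstant and $a_1,a_2\in A$, not both zero, with $d_1=\deg a_1<\deg n$, $d_2=\deg a_2<\deg n$ (where $\deg 0=-\infty$), and $u=n^{-1}(a_1\omega+a_2)$. Then $\log u=\ell+d_1-\deg n$ if $d_2\le d_1+\ell$, and $\log u=d_2-\deg n$ if $d_2>d_1+\ell$; and $$\log e^\Lambda(u)=\begin{cases}\frac{q}{q-1}\bigl(q^{\ell+d_1-\deg n}-1\bigr), & \log u\ge0,\\ \log u,&\log u<0.\end{cases}$$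
   Context: $\mathbb{F}_q$ is a finite field with $q$ elements; $K=\mathbb{F}_q(T)$, $A=\mathbb{F}_q[T]$, $K_\infty=\mathbb{F}_q((1/T))$, $C_\infty$ the completion of an algebraic closure of $K_\infty$, with absolute value normalized by $|T|=q$; $\log x=\log_q|x|$ ($\log 0=-\infty$). For $\omega\in C_\infty$, $|\omega|_i:=\inf_{x\in K_\infty}|\omega-x|$. For a rank-$2$ $A$-lattice $\Lambda\subset C_\infty$ (finitely generated discrete $A$-submodule), $e^\Lambda(z)=z\prod_{0\neq\lambda\in\Lambda}(1-z/\lambda)$, and $\Delta_T(\Lambda)$ is the coefficient of $X^{q^2}$ in the unique polynomial $\phi^\Lambda_T(X)=TX+\ell_1X^q+\ell_2X^{q^2}$ with $e^\Lambda(Tz)=\phi^\Lambda_T(e^\Lambda(z))$. *)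

theory Defs
  imports "HOL-Computational_Algebra.Polynomial" "HOL-Library.Extended_Real"
begin

text \<open>These properties characterise
C_infinity (the completion of an algebraic closure of K_infinity, with
the normalisation |T| = q) up to isometric isomorphism.\<close>

definition Fq :: "nat \<Rightarrow> 'c::field set" where
  "Fq q = {x. x ^ q = x}"

definition Aset :: "nat \<Rightarrow> 'c::field \<Rightarrow> 'c set" where
  "Aset q T = {poly f T | f. \<forall>i. coeff f i \<in> Fq q}"

definition Kset :: "nat \<Rightarrow> 'c::field \<Rightarrow> 'c set" where
  "Kset q T = {a / b | a b. a \<in> Aset q T \<and> b \<in> Aset q T \<and> b \<noteq> 0}"

definition Kinf :: "nat \<Rightarrow> ('c::field \<Rightarrow> real) \<Rightarrow> 'c \<Rightarrow> 'c set" where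
  "Kinf q absv T = {x. \<forall>e>0. \<exists>y\<in>Kset q T. absv (x - y) < e}"

definition abs_i :: "nat \<Rightarrow> ('c::field \<Rightarrow> real) \<Rightarrow> 'c \<Rightarrow> 'c \<Rightarrow> real" where
  "abs_i q absv T w = Inf {absv (w - x) | x. x \<in> Kinf q absv T}"

definition conv_to :: "('c::field \<Rightarrow> real) \<Rightarrow> (nat \<Rightarrow> 'c) \<Rightarrow> 'c \<Rightarrow> bool" where
  "conv_to absv X L \<longleftrightarrow> (\<forall>e>0. \<exists>N. \<forall>n\<ge>N. absv (X n - L) < e)"

definition is_Cinfty :: "nat \<Rightarrow> ('c::field \<Rightarrow> real) \<Rightarrow> 'c \<Rightarrow> bool" where
  "is_Cinfty q absv T \<longleftrightarrow>
     (\<exists>p k. prime p \<and> k > 0 \<and> q = p ^ k) \<and>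
     of_nat q = (0::'c) \<and>
     (\<forall>x. absv x \<ge> 0) \<and> (\<forall>x. absv x = 0 \<longleftrightarrow> x = 0) \<and>
     (\<forall>x y. absv (x * y) = absv x * absv y) \<and>
     (\<forall>x y. absv (x + y) \<le> max (absv x) (absv y)) \<and>
     (\<forall>X. (\<forall>e>0. \<exists>N. \<forall>m\<ge>N. \<forall>n\<ge>N. absv (X m - X n) < e)
           \<longrightarrow> (\<exists>L. conv_to absv X L)) \<and>
     (\<forall>f::'c poly. degree f > 0 \<longrightarrow> (\<exists>x. poly f x = 0)) \<and>
     absv T = real q \<and>
     (\<forall>x e. e > 0 \<longrightarrow> (\<exists>y. absv (x - y) < e \<and>
         (\<exists>f::'c poly. f \<noteq> 0 \<and> (\<forall>i. coeff f i \<in> Kset q T) \<and> poly f y = 0)))"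

definition logv :: "nat \<Rightarrow> ('c::field \<Rightarrow> real) \<Rightarrow> 'c \<Rightarrow> ereal" where
  "logv q absv x = (if x = 0 then -\<infinity> else ereal (log (real q) (absv x)))"

definition expL :: "('c::field \<Rightarrow> real) \<Rightarrow> 'c set \<Rightarrow> 'c \<Rightarrow> 'c" where
  "expL absv L z = (THE v. conv_to absv
      (\<lambda>k. z * (\<Prod>l\<in>{l\<in>L - {0}. absv l \<le> real k}. (1 - z / l))) v)"

text \<open>Delta_T(L): coefficient of X^(q^2) in the unique
phi_T(X) = T X + l1 X^q + l2 X^(q^2) with e(T z) = phi_T(e(z)).\<close>
definition DeltaT :: "nat \<Rightarrow> ('c::field \<Rightarrow> real) \<Rightarrow> 'c \<Rightarrow> 'c set \<Rightarrow> 'c" where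
  "DeltaT q absv T L = (THE l2. \<exists>l1. \<forall>z.
      expL absv L (T * z) = T * expL absv L z + l1 * expL absv L z ^ q
                            + l2 * expL absv L z ^ (q ^ 2))"

definition latt :: "nat \<Rightarrow> 'c::field \<Rightarrow> 'c \<Rightarrow> 'c set" where
  "latt q T w = {a * w + b | a b. a \<in> Aset q T \<and> b \<in> Aset q T}"

end

theory Submission
  imports Defs "HOL-Computational_Algebra.Primes"
begin

locale cinf =
  fixes q :: nat and N :: "'c::field \<Rightarrow> real" and T :: 'c
  assumes qpow: "\<exists>p k. prime p \<and> k>0 \<and> q = p^k"
  and charq: "of_nat q = (0::'c)"
  and N_nonneg: "N x \<ge> 0" and N_zero: "N x = 0 \<longleftrightarrow> x = 0"
  and N_mult: "N (x*y) = N x * N y" and N_ultra: "N (x+y) \<le> max (N x) (N y)"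
  and complete: "(\<forall>e>0. \<exists>M. \<forall>m\<ge>M. \<forall>n\<ge>M. N (X m - X n) < e) \<Longrightarrow> \<exists>L. conv_to N X L"
  and algclosed: "degree (f::'c poly) > 0 \<Longrightarrow> \<exists>x. poly f x = 0"
  and NT: "N T = real q"
begin

lemma N_0[simp]: "N 0 = 0" using N_zero by simp

lemma N_pos: "x \<noteq> 0 \<Longrightarrow> N x > 0"
  using N_nonneg[of x] N_zero[of x] by linarith

lemma N_one: "N 1 = 1"
proof -
  have "N 1 = N 1 * N 1" using N_mult[of 1 1] by simp
  moreover have "N 1 > 0" using N_pos by simp
  ultimately show ?thesis by simp
qed

lemma N_minus: "N (-x) = N x"
proof -
  have "N (-1) * N (-1) = 1" using N_mult[of "-1" "-1"] N_one by simp
  hence "N (-1) = 1" using N_nonneg[of "-1"]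
    by (metis abs_of_nonneg abs_square_eq_1 mult.commute power2_eq_square)
  thus ?thesis using N_mult[of "-1" x] by simp
qed

lemma N_diff_comm: "N (x - y) = N (y - x)"
  using N_minus[of "x-y"] by simp

lemma N_inverse: "N (inverse x) = inverse (N x)"
proof (cases "x = 0")
  case False
  hence "N x * N (inverse x) = 1" using N_mult[of x "inverse x"] N_one by simp
  thus ?thesis by (metis inverse_unique)
qed (simp add: N_zero)

lemma N_divide: "N (x / y) = N x / N y"
  by (simp add: divide_inverse N_mult N_inverse)

lemma N_power: "N (x ^ n) = N x ^ n"
  by (induction n) (simp_all add: N_one N_mult)

lemma N_diff: "N (x - y) \<le> max (N x) (N y)"
  using N_ultra[of x "-y"] N_minus[of y] by simp

lemma N_add_eq: "N x < N y \<Longrightarrow> N (x + y) = N y"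
proof -
  assume a: "N x < N y"
  have "N (x+y) \<le> N y" using N_ultra[of x y] a by simp
  moreover have "N y \<le> max (N (x+y)) (N x)" using N_diff[of "x+y" x] by simp
  ultimately show ?thesis using a by linarith
qed

lemma N_add_eq': "N y < N x \<Longrightarrow> N (x + y) = N x"
  using N_add_eq[of y x] by (simp add: add.commute)

lemma N_diff_eq: "N y < N x \<Longrightarrow> N (x - y) = N x"
  using N_add_eq'[of "-y" x] N_minus[of y] by simp

lemma N_diff_eq': "N x < N y \<Longrightarrow> N (x - y) = N y"
  using N_add_eq[of x "-y"] N_minus[of y] by simp

lemma N_add_max: "N x \<noteq> N y \<Longrightarrow> N (x + y) = max (N x) (N y)"
  by (cases "N x < N y") (auto simp: N_add_eq N_add_eq')

lemma N_sum_le: "finite S \<Longrightarrow> (\<And>i. i \<in> S \<Longrightarrow> N (f i) \<le> B) \<Longrightarrow> B \<ge> 0 \<Longrightarrow> N (sum f S) \<le> B"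
proof (induction S rule: finite_induct)
  case empty then show ?case by simp
next
  case (insert x F)
  then have "N (f x) \<le> B" by simp
  moreover have "N (sum f F) \<le> B" using insert by simp
  ultimately show ?case using insert(1,2) N_ultra[of "f x" "sum f F"] by (simp add: sum.insert)
qed

lemma q_ge2: "q \<ge> 2"
  using qpow by (metis one_less_power prime_gt_1_nat Suc_1 Suc_leI)

lemma q_gt1: "real q > 1" using q_ge2 by simp

lemma CHAR_is: "\<exists>k. q = CHAR('c) ^ k \<and> prime CHAR('c)"
proof -
  obtain p k where pk: "prime p" "k>0" "q = p^k" using qpow by blast
  have "CHAR('c) dvd p ^ k" using charq pk(3) of_nat_eq_0_iff_char_dvd by blast
  have "CHAR('c) > 0" using charq q_ge2 CHAR_pos_iff by (metis not_numeral_le_zero gr0I of_nat_0_eq_iff) 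
  hence pc: "prime CHAR('c)" using prime_CHAR_semidom by blast
  hence "CHAR('c) dvd p" using \<open>CHAR('c) dvd p ^ k\<close> prime_dvd_power by blast
  hence "CHAR('c) = p" using pk(1) pc by (metis prime_nat_iff prime_gt_1_nat less_irrefl)
  thus ?thesis using pk pc by auto
qed

lemma frob: "(x + y :: 'c) ^ q = x ^ q + y ^ q"
  using CHAR_is freshmans_dream' by blast

end


context cinf begin

abbreviation FF :: "'c set" where "FF \<equiv> Fq q"

lemma Fq_iff: "c \<in> FF \<longleftrightarrow> c ^ q = c" by (simp add: Fq_def)

lemma Fq_0[simp]: "0 \<in> FF" using q_ge2 by (simp add: Fq_def)
lemma Fq_1[simp]: "1 \<in> FF" by (simp add: Fq_def)
lemma Fq_add: "a \<in> FF \<Longrightarrow> b \<in> FF \<Longrightarrow> a + b \<in> FF"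
proof -
  assume "a \<in> FF" "b \<in> FF"
  moreover have "(a+b)^q = a^q + b^q" by (rule frob)
  ultimately show ?thesis by (simp add: Fq_def)
qed
lemma Fq_mult: "a \<in> FF \<Longrightarrow> b \<in> FF \<Longrightarrow> a * b \<in> FF"
  by (simp add: Fq_def power_mult_distrib)
lemma Fq_uminus: "a \<in> FF \<Longrightarrow> -a \<in> FF"
proof -
  assume "a \<in> FF"
  hence "a ^ q = a" by (simp add: Fq_def)
  have "(0::'c) = 0 ^ q" using q_ge2 by simp
  also have "\<dots> = (a + (-a)) ^ q" by simp
  also have "\<dots> = a^q + (-a)^q" by (rule frob)
  also have "\<dots> = a + (-a)^q" using \<open>a ^ q = a\<close> by simp
  finally have "(-a)^q = -a" by (simp add: eq_neg_iff_add_eq_0 add.commute)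
  thus ?thesis by (simp add: Fq_def)
qed
lemma Fq_diff: "a \<in> FF \<Longrightarrow> b \<in> FF \<Longrightarrow> a - b \<in> FF"
  using Fq_add[of a "-b"] Fq_uminus[of b] by (simp only: diff_conv_add_uminus)
lemma Fq_inverse: "a \<in> FF \<Longrightarrow> inverse a \<in> FF"
  by (simp add: Fq_def power_inverse)
lemma Fq_divide: "a \<in> FF \<Longrightarrow> b \<in> FF \<Longrightarrow> a / b \<in> FF"
  by (simp add: divide_inverse Fq_mult Fq_inverse)
lemma Fq_sum: "(\<And>i. i \<in> S \<Longrightarrow> f i \<in> FF) \<Longrightarrow> sum f S \<in> FF"
  by (induction S rule: infinite_finite_induct) (auto intro: Fq_add)

lemma Fq_N: "c \<in> FF \<Longrightarrow> c \<noteq> 0 \<Longrightarrow> N c = 1"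
proof -
  assume c: "c \<in> FF" "c \<noteq> 0"
  have "c ^ q = c" using c by (simp add: Fq_def)
  hence e: "N c ^ q = N c" by (simp add: N_power[symmetric])
  have qs: "q = Suc (q - 1)" using q_ge2 by simp
  have pos: "N c > 0" using c N_pos by simp
  have "N c * N c ^ (q - 1) = N c * 1" using e qs by (metis power_Suc mult_1_right)
  hence "N c ^ (q - 1) = 1 ^ (q - 1)" using pos by simp
  thus ?thesis using power_eq_iff_eq_base[of "q-1" "N c" 1] q_ge2 pos by simp
qed

lemma Fq_N_le: "c \<in> FF \<Longrightarrow> N c \<le> 1"
  by (cases "c = 0") (simp_all add: Fq_N)

lemma roots_split:
  fixes p :: "'c poly"
  assumes "p \<noteq> 0" "\<And>x. poly p x = 0 \<Longrightarrow> poly (pderiv p) x \<noteq> 0"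
  shows "card {x. poly p x = 0} = degree p \<and> p = smult (lead_coeff p) (\<Prod>x\<in>{x. poly p x = 0}. [:-x,1:])"
  using assms
proof (induction "degree p" arbitrary: p rule: less_induct)
  case (less p)
  show ?case
  proof (cases "degree p = 0")
    case True
    then obtain c where c: "p = [:c:]" using degree_eq_zeroE by blast
    hence "c \<noteq> 0" using less by auto
    hence "{x. poly p x = 0} = {}" using c by auto
    thus ?thesis using True c by simp
  next
    case False
    then obtain a where a: "poly p a = 0" using algclosed[of p] by auto
    then obtain r where r: "p = [:-a,1:] * r" using poly_eq_0_iff_dvd by blast
    have r0: "r \<noteq> 0" using r less by auto
    have "degree ([:-a,1:] * r) = degree [:-a,1:] + degree r" by (rule degree_mult_eq) (use r0 in auto)
    hence dr: "degree p = Suc (degree r)" using r by simp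
    have d1: "pderiv [:-a,1::'c:] = 1" by (simp add: pderiv_pCons)
    have pd: "pderiv p = r + [:-a,1:] * pderiv r" unfolding r pderiv_mult d1
      by (simp only: mult_1_right) (rule add.commute)
    have ra: "poly r a \<noteq> 0" using less(3)[OF a] pd by simp
    have rh: "\<And>x. poly r x = 0 \<Longrightarrow> poly (pderiv r) x \<noteq> 0"
    proof -
      fix x assume x: "poly r x = 0"
      hence "x \<noteq> a" using ra by auto
      have "poly p x = 0" using r x by simp
      hence "poly (pderiv p) x \<noteq> 0" using less(3) by blast
      thus "poly (pderiv r) x \<noteq> 0" using pd x by auto
    qed
    have IH: "card {x. poly r x = 0} = degree r \<and> r = smult (lead_coeff r) (\<Prod>x\<in>{x. poly r x = 0}. [:-x,1:])"
      using less(1)[of r] dr r0 rh by auto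
    have rs: "{x. poly p x = 0} = insert a {x. poly r x = 0}" using r by auto
    have fin: "finite {x. poly r x = 0}" using poly_roots_finite r0 by blast
    have an: "a \<notin> {x. poly r x = 0}" using ra by auto
    have lc: "lead_coeff p = lead_coeff r" by (simp only: r lead_coeff_mult) simp
    show ?thesis
    proof
      show "card {x. poly p x = 0} = degree p" using rs fin an IH dr by simp
      have "smult (lead_coeff p) (\<Prod>x\<in>{x. poly p x = 0}. [:-x,1:])
          = [:-a,1:] * smult (lead_coeff r) (\<Prod>x\<in>{x. poly r x = 0}. [:-x,1:])"
        using rs fin an lc by (simp add: mult_smult_right)
      also have "\<dots> = p" using IH r by simp
      finally show "p = smult (lead_coeff p) (\<Prod>x\<in>{x. poly p x = 0}. [:-x,1:])" by simp
    qed
  qed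
qed

definition Xq :: "'c poly" where "Xq = monom 1 q - [:0,1:]"

lemma Xq_props: "Xq \<noteq> 0 \<and> degree Xq = q \<and> lead_coeff Xq = 1 \<and> {x. poly Xq x = 0} = FF \<and> pderiv Xq = [:-1:]"
proof -
  have d: "degree (monom (1::'c) q) = q" by (simp add: degree_monom_eq)
  have d1: "degree [:0,1::'c:] = 1" by simp
  have dX: "degree Xq = q" unfolding Xq_def using d d1 q_ge2 by (simp add: degree_add_eq_left diff_conv_add_uminus)
  hence "Xq \<noteq> 0" using q_ge2 by auto
  have "coeff [:0,1::'c:] q = 0" using q_ge2 by (simp add: coeff_pCons split: nat.split)
  hence "coeff Xq q = 1" unfolding Xq_def using q_ge2 by (simp add: coeff_monom)
  hence "lead_coeff Xq = 1" using dX by simp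
  moreover have "{x. poly Xq x = 0} = FF" by (auto simp: Xq_def Fq_def poly_monom)
  moreover have "pderiv Xq = [:-1:]" unfolding Xq_def
    by (simp add: pderiv_diff pderiv_monom charq pderiv_pCons)
  ultimately show ?thesis using dX \<open>Xq \<noteq> 0\<close> by simp
qed

lemma card_Fq: "card (FF :: 'c set) = q" and finite_Fq: "finite (FF :: 'c set)"
  and Xq_prod: "Xq = (\<Prod>x\<in>FF. [:-x,1:])"
proof -
  have h: "\<And>x. poly Xq x = 0 \<Longrightarrow> poly (pderiv Xq) x \<noteq> 0" using Xq_props by simp
  from roots_split[OF _ h] Xq_props
  show "card (FF :: 'c set) = q" "Xq = (\<Prod>x\<in>FF. [:-x,1:])" by auto
  show "finite (FF :: 'c set)" using poly_roots_finite[of Xq] Xq_props by auto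
qed

lemma prod_Fq_nz: "(\<Prod>c\<in>FF - {0}. (t - c)) = t ^ (q-1) - 1"
proof -
  have fin: "finite (FF :: 'c set)" by (rule finite_Fq)
  have "(\<Prod>x\<in>FF. [:-x,1:]) = [:0,1:] * (\<Prod>x\<in>FF - {0}. [:-x,1:])"
    by (subst prod.remove[OF fin Fq_0]) simp
  moreover have "Xq = [:0,1:] * (monom 1 (q-1) - 1)"
  proof -
    have qs: "q = Suc (q - 1)" using q_ge2 by simp
    have "[:0,1::'c:] * monom 1 (q-1) = monom 1 (Suc (q-1))"
      by (simp add: monom_Suc)
    hence "[:0,1::'c:] * monom 1 (q-1) = monom 1 q" using qs by simp
    thus ?thesis unfolding Xq_def by (simp add: algebra_simps)
  qed
  ultimately have "(\<Prod>x\<in>FF - {0}. [:-x,1:]) = monom 1 (q-1) - 1" using Xq_prod by simp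
  hence "poly (\<Prod>x\<in>FF - {0}. [:-x,1:]) t = poly (monom 1 (q-1) - 1) t" by simp
  thus ?thesis by (simp add: poly_prod poly_monom)
qed

lemma prod_Fq_formula:
  assumes "Y \<noteq> 0"
  shows "(\<Prod>c\<in>FF - {0}. (1 - X / (c * Y))) = 1 - (X / Y) ^ (q - 1)"
proof -
  define t where "t = X / Y"
  have fin: "finite (FF - {0} :: 'c set)" using finite_Fq by simp
  have cd: "card (FF - {0} :: 'c set) = q - 1" using card_Fq finite_Fq by (simp add: card_Diff_singleton)
  have e1: "\<And>c. c \<in> FF - {0} \<Longrightarrow> 1 - X / (c * Y) = (c - t) / c"
    using assms by (auto simp: t_def field_simps)
  have "(\<Prod>c\<in>FF - {0}. (1 - X / (c * Y))) = (\<Prod>c\<in>FF - {0}. (c - t) / c)"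
    using e1 by (rule prod.cong[OF refl])
  also have "\<dots> = (\<Prod>c\<in>FF - {0}. (c - t)) / (\<Prod>c\<in>FF - {0}. c)"
    by (rule prod_dividef)
  also have "(\<Prod>c\<in>FF - {0}. (c - t)) = (\<Prod>c\<in>FF - {0}. (-1) * (t - c))" by simp
  also have "\<dots> = (\<Prod>c\<in>FF - {0}. (-1::'c)) * (\<Prod>c\<in>FF - {0}. (t - c))" by (rule prod.distrib)
  also have "\<dots> = (-1)^(q-1) * (\<Prod>c\<in>FF - {0}. (t - c))" using cd by simp
  also have "(\<Prod>c\<in>FF - {0}. c) = (-1)^(q-1) * (\<Prod>c\<in>FF - {0}. (0 - c))"
  proof -
    have "(\<Prod>c\<in>FF - {0}. (0 - c)) = (\<Prod>c\<in>FF - {0}. (-1) * c)" by simp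
    also have "\<dots> = (\<Prod>c\<in>FF - {0}. (-1::'c)) * (\<Prod>c\<in>FF - {0}. c)" by (rule prod.distrib)
    also have "\<dots> = (-1)^(q-1) * (\<Prod>c\<in>FF - {0}. c)" using cd by simp
    finally have A: "(\<Prod>c\<in>FF - {0}. (0 - c)) = (-1)^(q-1) * (\<Prod>c\<in>FF - {0}. c)" .
    hence "(-1)^(q-1) * (\<Prod>c\<in>FF - {0}. (0 - c)) = ((-1)^(q-1) * (-1)^(q-1)) * (\<Prod>c\<in>FF - {0}. c)"
      by (simp only: mult.assoc)
    thus ?thesis by (simp only: minus_one_mult_self mult_1)
  qed
  also have "(\<Prod>c\<in>FF - {0}. (0 - c)) = (-1::'c)" using prod_Fq_nz[of 0] q_ge2 by simp
  finally have F: "(\<Prod>c\<in>FF - {0}. (1 - X / (c * Y))) = (-1)^(q-1) * (t ^ (q-1) - 1) / ((-1)^(q-1) * (-1))"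
    by (simp only: prod_Fq_nz)
  have nz: "(-1::'c)^(q-1) \<noteq> 0" by simp
  have "(-1)^(q-1) * (t ^ (q-1) - 1) / ((-1)^(q-1) * (-1)) = (t ^ (q-1) - 1) / (-1::'c)"
    by (rule mult_divide_mult_cancel_left[OF nz])
  also have "\<dots> = 1 - t ^ (q-1)" by simp
  finally show ?thesis using F by (simp add: t_def)
qed

end


context cinf begin

definition Fqp :: "'c poly \<Rightarrow> bool" where "Fqp f \<longleftrightarrow> (\<forall>i. coeff f i \<in> FF)"
abbreviation AA :: "'c set" where "AA \<equiv> Aset q T"

lemma AA_iff: "x \<in> AA \<longleftrightarrow> (\<exists>f. Fqp f \<and> x = poly f T)"
  by (auto simp: Aset_def Fqp_def)

lemma Fqp_pCons: "Fqp (pCons a p) \<longleftrightarrow> a \<in> FF \<and> Fqp p"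
  unfolding Fqp_def
proof safe
  fix i assume "\<forall>i. coeff (pCons a p) i \<in> FF"
  from this[rule_format, of "Suc i"] show "coeff p i \<in> FF" by simp
next
  assume "\<forall>i. coeff (pCons a p) i \<in> FF"
  from this[rule_format, of 0] show "a \<in> FF" by simp
next
  fix i assume "a \<in> FF" "\<forall>i. coeff p i \<in> FF"
  thus "coeff (pCons a p) i \<in> FF" by (cases i) auto
qed

lemma Fqp_0[simp]: "Fqp 0" by (simp add: Fqp_def)

lemma N_T_pow: "N (T ^ n) = real q ^ n" by (simp add: N_power NT)

lemma T_nz: "T \<noteq> 0" using NT q_ge2 N_zero by (metis of_nat_0_eq_iff not_numeral_le_zero)

lemma N_polyT: "Fqp f \<Longrightarrow> f \<noteq> 0 \<Longrightarrow> N (poly f T) = real q ^ degree f"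
proof (induction f rule: pCons_induct)
  case 0 then show ?case by simp
next
  case (pCons a p)
  hence a: "a \<in> FF" and fp: "Fqp p" using Fqp_pCons by auto
  show ?case
  proof (cases "p = 0")
    case True
    hence "a \<noteq> 0" using pCons by auto
    thus ?thesis using True a Fq_N by simp
  next
    case False
    have "N (T * poly p T) = real q ^ Suc (degree p)" using pCons.IH[OF fp False] by (simp add: N_mult NT)
    moreover have "N a < real q ^ Suc (degree p)"
    proof -
      have "1 < real q ^ Suc (degree p)" by (rule one_less_power[OF q_gt1]) simp
      thus ?thesis using Fq_N_le[OF a] by linarith
    qed
    ultimately have "N (a + T * poly p T) = real q ^ Suc (degree p)" using N_add_eq by simp
    thus ?thesis using False by simp
  qed
qed

lemma polyT_zero_iff: "Fqp f \<Longrightarrow> poly f T = 0 \<longleftrightarrow> f = 0"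
proof
  assume h: "Fqp f" "poly f T = 0"
  show "f = 0"
  proof (rule ccontr)
    assume "f \<noteq> 0"
    hence "N (poly f T) = real q ^ degree f" using N_polyT h by blast
    moreover have "real q ^ degree f > 0" using q_gt1 by simp
    ultimately have "N (poly f T) > 0" by simp
    thus False using h(2) by simp
  qed
qed simp

lemma Fqp_add: "Fqp f \<Longrightarrow> Fqp g \<Longrightarrow> Fqp (f + g)" by (simp add: Fqp_def Fq_add)
lemma Fqp_uminus: "Fqp f \<Longrightarrow> Fqp (- f)" by (simp add: Fqp_def Fq_uminus)
lemma Fqp_diff: "Fqp f \<Longrightarrow> Fqp g \<Longrightarrow> Fqp (f - g)" by (simp add: Fqp_def Fq_diff)
lemma Fqp_mult: "Fqp f \<Longrightarrow> Fqp g \<Longrightarrow> Fqp (f * g)"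
  unfolding Fqp_def coeff_mult by (auto intro!: Fq_sum Fq_mult)
lemma Fqp_const: "c \<in> FF \<Longrightarrow> Fqp [:c:]" by (simp add: Fqp_pCons)
lemma Fqp_X: "Fqp [:0,1:]" by (simp add: Fqp_pCons)

lemma AA_0[simp]: "0 \<in> AA" unfolding AA_iff by (rule exI[of _ 0]) simp
lemma AA_const: "c \<in> FF \<Longrightarrow> c \<in> AA" unfolding AA_iff by (rule exI[of _ "[:c:]"]) (simp add: Fqp_const)
lemma AA_1[simp]: "1 \<in> AA" using AA_const by simp
lemma AA_T: "T \<in> AA" unfolding AA_iff by (rule exI[of _ "[:0,1:]"]) (simp add: Fqp_X)
lemma AA_add: "x \<in> AA \<Longrightarrow> y \<in> AA \<Longrightarrow> x + y \<in> AA"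
  unfolding AA_iff by (metis Fqp_add poly_add)
lemma AA_uminus: "x \<in> AA \<Longrightarrow> - x \<in> AA"
  unfolding AA_iff by (metis Fqp_uminus poly_minus)
lemma AA_diff: "x \<in> AA \<Longrightarrow> y \<in> AA \<Longrightarrow> x - y \<in> AA"
  unfolding AA_iff by (metis Fqp_diff poly_diff)
lemma AA_mult: "x \<in> AA \<Longrightarrow> y \<in> AA \<Longrightarrow> x * y \<in> AA"
  unfolding AA_iff by (metis Fqp_mult poly_mult)

lemma AA_N: "x \<in> AA \<Longrightarrow> x \<noteq> 0 \<Longrightarrow> \<exists>d. N x = real q ^ d"
proof -
  assume "x \<in> AA" "x \<noteq> 0"
  then obtain f where f: "Fqp f" "x = poly f T" using AA_iff by blast
  hence "f \<noteq> 0" using \<open>x \<noteq> 0\<close> by auto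
  thus ?thesis using N_polyT[OF f(1)] f(2) by blast
qed

lemma AA_N_ge1: "x \<in> AA \<Longrightarrow> x \<noteq> 0 \<Longrightarrow> N x \<ge> 1"
proof -
  assume "x \<in> AA" "x \<noteq> 0"
  then obtain d where "N x = real q ^ d" using AA_N by blast
  thus ?thesis using one_le_power[of "real q" d] q_gt1 by simp
qed

lemma AA_decomp: "x \<in> AA \<Longrightarrow> \<exists>c\<in>FF. \<exists>y\<in>AA. x = c + T * y"
proof -
  assume "x \<in> AA"
  then obtain f where f: "Fqp f" "x = poly f T" using AA_iff by blast
  obtain c g where "f = pCons c g" by (rule pCons_cases)
  hence "c \<in> FF" "Fqp g" "x = c + T * poly g T" using f Fqp_pCons by auto
  thus ?thesis using AA_iff by blast
qed

definition As :: "nat \<Rightarrow> 'c set" where "As s = {x\<in>AA. N x < real q ^ s}"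

lemma As_0: "As 0 = {0}"
  using AA_N_ge1 by (force simp: As_def)

lemma As_Suc: "As (Suc s) = (\<lambda>(c,y). c + T * y) ` (FF \<times> As s)"
proof
  show "As (Suc s) \<subseteq> (\<lambda>(c,y). c + T * y) ` (FF \<times> As s)"
  proof
    fix x assume x: "x \<in> As (Suc s)"
    hence "x \<in> AA" by (simp add: As_def)
    then obtain c y where cy: "c \<in> FF" "y \<in> AA" "x = c + T * y" using AA_decomp by blast
    have "N (T * y) = N (x - c)" using cy by simp
    also have "\<dots> \<le> max (N x) (N c)" by (rule N_diff)
    also have "\<dots> < real q ^ Suc s"
    proof -
      have "1 < real q ^ Suc s" by (rule one_less_power[OF q_gt1]) simp
      moreover have "N x < real q ^ Suc s" using x by (simp add: As_def)
      ultimately show ?thesis using Fq_N_le[OF cy(1)] by simp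
    qed
    finally have "real q * N y < real q * real q ^ s" by (simp add: N_mult NT)
    hence "N y < real q ^ s" using q_gt1 by simp
    thus "x \<in> (\<lambda>(c,y). c + T * y) ` (FF \<times> As s)" using cy As_def by force
  qed
next
  show "(\<lambda>(c,y). c + T * y) ` (FF \<times> As s) \<subseteq> As (Suc s)"
  proof safe
    fix c y assume "c \<in> FF" "y \<in> As s"
    hence y: "y \<in> AA" "N y < real q ^ s" by (auto simp: As_def)
    have "N (T * y) < real q ^ Suc s" using y q_gt1 by (simp add: N_mult NT)
    moreover have "N c < real q ^ Suc s"
    proof -
      have "1 < real q ^ Suc s" by (rule one_less_power[OF q_gt1]) simp
      thus ?thesis using Fq_N_le[OF \<open>c\<in>FF\<close>] by linarith
    qed
    ultimately have "N (c + T * y) < real q ^ Suc s" using N_ultra[of c "T*y"] by simp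
    moreover have "c + T * y \<in> AA" using AA_add AA_mult AA_T AA_const \<open>c\<in>FF\<close> y by blast
    ultimately show "c + T * y \<in> As (Suc s)" by (simp add: As_def)
  qed
qed

lemma As_inj: "inj_on (\<lambda>(c,y). c + T * y) (FF \<times> AA)"
proof (rule inj_onI, clarify)
  fix c y c' y' assume h: "c \<in> FF" "y \<in> AA" "c' \<in> FF" "y' \<in> AA" "c + T * y = c' + T * y'"
  have e: "c - c' = T * (y' - y)" using h(5) by (simp add: algebra_simps)
  have "y' = y"
  proof (rule ccontr)
    assume "y' \<noteq> y"
    hence "N (y' - y) \<ge> 1" using AA_N_ge1 AA_diff h by simp
    hence "real q * N (y' - y) \<ge> real q * 1" using q_gt1 by (intro mult_left_mono) auto
    hence X: "real q * N (y' - y) > 1" using q_gt1 by linarith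
    have "N (T * (y' - y)) > 1" using X by (simp add: N_mult NT)
    moreover have "N (c - c') \<le> 1" using N_diff[of c c'] Fq_N_le[OF h(1)] Fq_N_le[OF h(3)] by linarith
    ultimately show False using e by simp
  qed
  thus "c = c' \<and> y = y'" using e by simp
qed

lemma As_sub: "As s \<subseteq> AA" by (auto simp: As_def)

lemma card_As: "finite (As s) \<and> card (As s) = q ^ s"
proof (induction s)
  case 0 then show ?case by (simp add: As_0)
next
  case (Suc s)
  have inj: "inj_on (\<lambda>(c,y). c + T * y) (FF \<times> As s)"
    by (rule inj_on_subset[OF As_inj]) (use As_sub in auto)
  have "card ((\<lambda>(c,y). c + T * y) ` (FF \<times> As s)) = card (FF \<times> As s)"
    by (rule card_image[OF inj])
  also have "\<dots> = q * q ^ s" using Suc card_Fq by (simp add: card_cartesian_product)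
  finally have "card (As (Suc s)) = q ^ Suc s" unfolding As_Suc by simp
  moreover have "finite (As (Suc s))" unfolding As_Suc using Suc finite_Fq by simp
  ultimately show ?case by simp
qed

lemma Kset_Kinf: "x \<in> Kset q T \<Longrightarrow> x \<in> Kinf q N T"
  unfolding Kinf_def by (auto intro!: bexI[of _ x])

lemma AA_div_Kset: "a \<in> AA \<Longrightarrow> b \<in> AA \<Longrightarrow> b \<noteq> 0 \<Longrightarrow> a / b \<in> Kset q T"
  unfolding Kset_def by blast

end


context cinf begin

definition subsp :: "'c set \<Rightarrow> bool" where
  "subsp V \<longleftrightarrow> finite V \<and> 0 \<in> V \<and> (\<forall>x\<in>V. \<forall>y\<in>V. x + y \<in> V) \<and> (\<forall>c\<in>FF. \<forall>x\<in>V. c * x \<in> V)"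

lemma subspD:
  assumes "subsp V"
  shows "finite V" "0 \<in> V" "x \<in> V \<Longrightarrow> y \<in> V \<Longrightarrow> x + y \<in> V" "c \<in> FF \<Longrightarrow> x \<in> V \<Longrightarrow> c * x \<in> V"
  using assms by (auto simp: subsp_def)

lemma subsp_uminus: "subsp V \<Longrightarrow> x \<in> V \<Longrightarrow> - x \<in> V"
  using subspD(4)[of V "-1" x] Fq_uminus[OF Fq_1] by simp

lemma subsp_diff: "subsp V \<Longrightarrow> x \<in> V \<Longrightarrow> y \<in> V \<Longrightarrow> x - y \<in> V"
  using subspD(3)[of V x "-y"] subsp_uminus[of V y] by simp

definition PP :: "'c set \<Rightarrow> 'c \<Rightarrow> 'c" where
  "PP V z = z * (\<Prod>v\<in>V-{0}. (1 - z / v))"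

definition pPP :: "'c set \<Rightarrow> 'c poly" where
  "pPP V = [:0,1:] * (\<Prod>v\<in>V-{0}. [:1, -1/v:])"

lemma poly_pPP: "poly (pPP V) z = PP V z"
proof -
  have "\<And>v. poly [:1, -1/v:] z = 1 - z / v" by simp
  thus ?thesis unfolding pPP_def PP_def poly_mult poly_prod by simp
qed

lemma degree_pPP: "finite V \<Longrightarrow> 0 \<in> V \<Longrightarrow> degree (pPP V) = card V"
proof -
  assume fin: "finite V" and z: "0 \<in> V"
  have nz: "\<forall>v\<in>V-{0}. [:1, -1/v:] \<noteq> 0" by simp
  have "degree (\<Prod>v\<in>V-{0}. [:1, -1/v:]) = (\<Sum>v\<in>V-{0}. degree [:1, -1/v::'c:])"
    by (rule degree_prod_eq_sum_degree[OF nz])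
  also have "\<dots> = (\<Sum>v\<in>V-{0}. 1)" by (intro sum.cong) auto
  also have "\<dots> = card V - 1" using fin z by simp
  finally have d: "degree (\<Prod>v\<in>V-{0}. [:1, -1/v:]) = card V - 1" .
  have p0: "(\<Prod>v\<in>V-{0}. [:1, -1/v::'c:]) \<noteq> 0" using nz by (simp add: prod_zero_iff fin)
  have "degree (pPP V) = degree [:0,1::'c:] + degree (\<Prod>v\<in>V-{0}. [:1, -1/v:])"
    unfolding pPP_def by (rule degree_mult_eq) (use p0 in auto)
  also have "\<dots> = card V"
  proof -
    have "card V > 0" using fin z card_gt_0_iff by blast
    thus ?thesis using d by simp
  qed
  finally show ?thesis .
qed

lemma pPP_nz: "finite V \<Longrightarrow> 0 \<in> V \<Longrightarrow> pPP V \<noteq> 0"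
proof -
  assume fin: "finite V" and z: "0 \<in> V"
  have "card V > 0" using fin z card_gt_0_iff by blast
  thus ?thesis using degree_pPP[OF fin z] by auto
qed

lemma PP_zero_iff: "finite V \<Longrightarrow> 0 \<in> V \<Longrightarrow> PP V z = 0 \<longleftrightarrow> z \<in> V"
proof -
  assume fin: "finite V" and z: "0 \<in> V"
  have "PP V z = 0 \<longleftrightarrow> z = 0 \<or> (\<exists>v\<in>V-{0}. 1 - z / v = 0)"
    by (simp add: PP_def prod_zero_iff fin)
  also have "\<dots> \<longleftrightarrow> z = 0 \<or> (\<exists>v\<in>V-{0}. z = v)"
    by (auto simp: field_simps)
  also have "\<dots> \<longleftrightarrow> z \<in> V" using z by auto
  finally show ?thesis .
qed

lemma PP_0[simp]: "PP V 0 = 0" by (simp add: PP_def)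

definition CC :: "'c set \<Rightarrow> 'c" where "CC V = (\<Prod>v\<in>V-{0}. - v)"

lemma CC_nz: "finite V \<Longrightarrow> CC V \<noteq> 0"
  by (simp add: CC_def prod_zero_iff)

lemma prod_shift: "subsp V \<Longrightarrow> (\<Prod>v\<in>V. (x + v)) = CC V * PP V x"
proof -
  assume V: "subsp V"
  have fin: "finite V" and z: "0 \<in> V" using subspD[OF V] by auto
  have "(\<Prod>v\<in>V. (x + v)) = (x + 0) * (\<Prod>v\<in>V-{0}. (x + v))"
    by (rule prod.remove[OF fin z])
  also have "(\<Prod>v\<in>V-{0}. (x + v)) = (\<Prod>v\<in>V-{0}. (x + - v))"
    by (rule prod.reindex_bij_witness[of _ uminus uminus]) (auto simp: subsp_uminus[OF V])
  also have "\<dots> = (\<Prod>v\<in>V-{0}. (- v) * (1 - x / v))"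
    by (intro prod.cong) (auto simp: field_simps)
  also have "\<dots> = CC V * (\<Prod>v\<in>V-{0}. (1 - x / v))"
    by (simp only: CC_def prod.distrib)
  finally show ?thesis by (simp add: PP_def)
qed

lemma PP_periodic: "subsp V \<Longrightarrow> y \<in> V \<Longrightarrow> PP V (x + y) = PP V x"
proof -
  assume V: "subsp V" and y: "y \<in> V"
  have "(\<Prod>v\<in>V. (x + y + v)) = (\<Prod>v\<in>V. (x + v))"
    by (rule prod.reindex_bij_witness[of _ "\<lambda>v. v - y" "\<lambda>v. v + y"])
       (auto simp: subsp_diff[OF V] subspD(3)[OF V] y algebra_simps)
  hence "CC V * PP V (x + y) = CC V * PP V x" using prod_shift[OF V] by metis
  thus ?thesis using CC_nz subspD(1)[OF V] by simp
qed

lemma PP_add: "subsp V \<Longrightarrow> PP V (x + y) = PP V x + PP V y"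
proof -
  assume V: "subsp V"
  have fin: "finite V" and z: "0 \<in> V" using subspD[OF V] by auto
  define n where "n = card V"
  have "card V > 0" using fin z card_gt_0_iff by blast
  hence n1: "n \<ge> 1" using n_def by simp
  define p where "p = pPP V"
  have dp: "degree p = n" using degree_pPP[OF fin z] p_def n_def by simp
  define D where "D = pcompose p [:x,1:] - p - [:PP V x:]"
  have polyD: "\<And>y. poly D y = PP V (x + y) - PP V y - PP V x"
    by (simp add: D_def poly_pcompose p_def poly_pPP)
  have D0: "D = 0"
  proof (rule ccontr)
    assume Dnz: "D \<noteq> 0"
    have dc: "degree (pcompose p [:x,1:]) = n" using dp by (simp add: degree_pcompose)
    have lc: "coeff (pcompose p [:x,1:]) n = lead_coeff p"
      using lead_coeff_comp[of "[:x,1:]" p] dc dp by simp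
    have "coeff D n = lead_coeff p - coeff p n - coeff [:PP V x:] n" by (simp add: D_def lc)
    also have "\<dots> = 0" using dp n1 by (simp add: coeff_pCons split: nat.split)
    finally have cn: "coeff D n = 0" .
    have "degree D \<le> n" unfolding D_def using dc dp
      by (intro degree_diff_le) auto
    moreover have "degree D \<noteq> n" using cn Dnz by auto
    ultimately have dD: "degree D < n" by simp
    have "V \<subseteq> {y. poly D y = 0}"
    proof
      fix y assume "y \<in> V"
      thus "y \<in> {y. poly D y = 0}" using polyD PP_periodic[OF V, of y x] PP_zero_iff[OF fin z, of y]
        by simp
    qed
    hence "card V \<le> card {y. poly D y = 0}" using poly_roots_finite[OF Dnz] by (rule card_mono[rotated])
    also have "\<dots> \<le> degree D" by (rule card_poly_roots_bound[OF Dnz])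
    finally show False using dD n_def by simp
  qed
  have "PP V (x + y) - PP V y - PP V x = 0" using polyD[of y] D0 by simp
  thus ?thesis by (simp add: algebra_simps)
qed

lemma PP_uminus: "subsp V \<Longrightarrow> PP V (- x) = - PP V x"
  using PP_add[of V x "-x"] by (simp add: eq_neg_iff_add_eq_0 add.commute)

lemma PP_diff: "subsp V \<Longrightarrow> PP V (x - y) = PP V x - PP V y"
  using PP_add[of V x "-y"] PP_uminus[of V y] by simp

lemma PP_smult: "subsp V \<Longrightarrow> c \<in> FF \<Longrightarrow> PP V (c * x) = c * PP V x"
proof (cases "c = 0")
  case False
  assume V: "subsp V" and c: "c \<in> FF"
  have ic: "inverse c \<in> FF" using Fq_inverse[OF c] .
  have "(\<Prod>v\<in>V-{0}. (1 - c * x / v)) = (\<Prod>v\<in>V-{0}. (1 - x / v))"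
    by (rule prod.reindex_bij_witness[of _ "\<lambda>v. c * v" "\<lambda>v. inverse c * v"])
       (use False subspD(4)[OF V c] subspD(4)[OF V ic] in \<open>auto simp: divide_inverse mult.assoc\<close>)
  thus ?thesis by (simp add: PP_def)
qed simp

lemma PP_fibre:
  assumes V: "subsp V" and x0: "x0 \<notin> V"
  shows "(\<Prod>v\<in>V. (1 - z / (x0 + v))) = 1 - PP V z / PP V x0"
proof -
  have fin: "finite V" and z: "0 \<in> V" using subspD[OF V] by auto
  have nz: "\<And>v. v \<in> V \<Longrightarrow> x0 + v \<noteq> 0"
  proof
    fix v assume "v \<in> V" "x0 + v = 0"
    hence "x0 = - v" by (simp add: eq_neg_iff_add_eq_0)
    thus False using subsp_uminus[OF V \<open>v\<in>V\<close>] x0 by simp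
  qed
  have px0: "PP V x0 \<noteq> 0" using PP_zero_iff[OF fin z] x0 by simp
  have "(\<Prod>v\<in>V. (1 - z / (x0 + v))) = (\<Prod>v\<in>V. ((x0 - z) + v) / (x0 + v))"
    using nz by (intro prod.cong) (auto simp: field_simps)
  also have "\<dots> = (\<Prod>v\<in>V. ((x0 - z) + v)) / (\<Prod>v\<in>V. (x0 + v))" by (rule prod_dividef)
  also have "\<dots> = (CC V * PP V (x0 - z)) / (CC V * PP V x0)" using prod_shift[OF V] by simp
  also have "\<dots> = PP V (x0 - z) / PP V x0" using CC_nz[OF fin] by simp
  also have "\<dots> = 1 - PP V z / PP V x0" using px0 by (simp add: PP_diff[OF V] field_simps)
  finally show ?thesis .
qed

lemma subsp_image: "subsp V \<Longrightarrow> subsp W \<Longrightarrow> subsp (PP V ` W)"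
proof -
  assume V: "subsp V" and W: "subsp W"
  show ?thesis unfolding subsp_def
  proof (intro conjI ballI)
    show "finite (PP V ` W)" using subspD(1)[OF W] by simp
    show "0 \<in> PP V ` W" using subspD(2)[OF W] PP_0 by (metis image_eqI)
  next
    fix a b assume "a \<in> PP V ` W" "b \<in> PP V ` W"
    then obtain x y where "x \<in> W" "y \<in> W" "a = PP V x" "b = PP V y" by auto
    hence "a + b = PP V (x + y)" "x + y \<in> W" using PP_add[OF V] subspD(3)[OF W] by auto
    thus "a + b \<in> PP V ` W" by blast
  next
    fix c a assume "c \<in> FF" "a \<in> PP V ` W"
    then obtain x where "x \<in> W" "a = PP V x" by auto
    hence "c * a = PP V (c * x)" "c * x \<in> W" using PP_smult[OF V \<open>c\<in>FF\<close>] subspD(4)[OF W \<open>c\<in>FF\<close>] by auto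
    thus "c * a \<in> PP V ` W" by blast
  qed
qed

lemma PP_comp:
  assumes V: "subsp V" and W: "subsp W" and VW: "V \<subseteq> W"
  shows "PP W z = PP (PP V ` W) (PP V z)"
proof -
  have finV: "finite V" and zV: "0 \<in> V" using subspD[OF V] by auto
  have finW: "finite W" using subspD[OF W] by auto
  define U where "U = PP V ` W"
  define g where "g = (\<lambda>x. 1 - z / x)"
  have "W - {0} = (V - {0}) \<union> (W - V)" using VW zV by auto
  moreover have "(\<Prod>x\<in>(V-{0}) \<union> (W-V). g x) = (\<Prod>x\<in>V-{0}. g x) * (\<Prod>x\<in>W-V. g x)"
    by (rule prod.union_disjoint) (use finV finW in auto)
  ultimately have "(\<Prod>x\<in>W-{0}. g x) = (\<Prod>x\<in>V-{0}. g x) * (\<Prod>x\<in>W-V. g x)" by simp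
  hence e1: "PP W z = PP V z * (\<Prod>x\<in>W-V. g x)" by (simp add: PP_def g_def)
  have im: "PP V ` (W - V) \<subseteq> U - {0}" using PP_zero_iff[OF finV zV] U_def by auto
  have finU: "finite (U - {0})" using finW U_def by simp
  have "(\<Prod>x\<in>W-V. g x) = (\<Prod>y\<in>U-{0}. (\<Prod>x\<in>{x. x \<in> W-V \<and> PP V x = y}. g x))"
    by (rule prod.group[symmetric]) (use finW finU im in auto)
  also have "\<dots> = (\<Prod>y\<in>U-{0}. (1 - PP V z / y))"
  proof (rule prod.cong[OF refl])
    fix y assume "y \<in> U - {0}"
    then obtain x0 where x0: "x0 \<in> W" "PP V x0 = y" "y \<noteq> 0" using U_def by auto
    have x0V: "x0 \<notin> V" using x0 PP_zero_iff[OF finV zV] by auto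
    have fib: "{x. x \<in> W-V \<and> PP V x = y} = (\<lambda>v. x0 + v) ` V"
    proof safe
      fix x assume x: "x \<in> W" "x \<notin> V" "y = PP V x"
      have "PP V (x - x0) = 0" using x x0 PP_diff[OF V] by simp
      hence "x - x0 \<in> V" using PP_zero_iff[OF finV zV] by simp
      thus "x \<in> (\<lambda>v. x0 + v) ` V" by (rule image_eqI[rotated]) simp
    next
      fix v assume "v \<in> V"
      thus "x0 + v \<in> W" using VW x0 subspD(3)[OF W] by auto
      show "x0 + v \<in> V \<Longrightarrow> False"
      proof -
        assume "x0 + v \<in> V"
        hence "(x0 + v) - v \<in> V" using subsp_diff[OF V] \<open>v\<in>V\<close> by blast
        thus False using x0V by simp
      qed
      show "PP V (x0 + v) = y" using PP_periodic[OF V \<open>v\<in>V\<close>] x0 by simp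
    qed
    have inj: "inj_on (\<lambda>v. x0 + v) V" by (rule inj_onI) simp
    have "(\<Prod>x\<in>{x. x \<in> W-V \<and> PP V x = y}. g x) = (\<Prod>v\<in>V. g (x0 + v))"
      unfolding fib by (rule prod.reindex[OF inj, unfolded comp_def])
    also have "\<dots> = 1 - PP V z / PP V x0" unfolding g_def by (rule PP_fibre[OF V x0V])
    finally show "(\<Prod>x\<in>{x. x \<in> W-V \<and> PP V x = y}. g x) = 1 - PP V z / y" using x0 by simp
  qed
  finally show ?thesis using e1 by (simp add: PP_def U_def)
qed

definition line :: "'c \<Rightarrow> 'c set" where "line y = (\<lambda>c. c * y) ` FF"

lemma subsp_line: "subsp (line y)"
  unfolding subsp_def
proof (intro conjI ballI)
  show "finite (line y)" using finite_Fq by (simp add: line_def)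
  show "0 \<in> line y" unfolding line_def by (rule image_eqI[of _ _ 0]) simp_all
next
  fix a b assume "a \<in> line y" "b \<in> line y"
  then obtain c d where "c \<in> FF" "d \<in> FF" "a = c * y" "b = d * y" by (auto simp: line_def)
  thus "a + b \<in> line y" unfolding line_def by (intro image_eqI[of _ _ "c + d"]) (auto simp: distrib_right Fq_add)
next
  fix e a assume "e \<in> FF" "a \<in> line y"
  then obtain c where "c \<in> FF" "a = c * y" by (auto simp: line_def)
  thus "e * a \<in> line y" unfolding line_def using \<open>e \<in> FF\<close> by (intro image_eqI[of _ _ "e * c"]) (auto simp: Fq_mult)
qed

lemma PP_line:
  assumes y: "y \<noteq> 0"
  shows "PP (line y) X = X - X ^ q / y ^ (q - 1)"
proof -
  have inj: "inj_on (\<lambda>c. c * y) (FF - {0})" using y by (auto intro: inj_onI)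
  have "line y - {0} = (\<lambda>c. c * y) ` (FF - {0})" using y by (auto simp: line_def)
  hence "(\<Prod>v\<in>line y - {0}. (1 - X / v)) = (\<Prod>c\<in>FF - {0}. (1 - X / (c * y)))"
    using prod.reindex[OF inj, of "\<lambda>v. 1 - X / v"] by simp
  also have "\<dots> = 1 - (X / y) ^ (q - 1)" by (rule prod_Fq_formula[OF y])
  finally have "PP (line y) X = X * (1 - (X / y) ^ (q - 1))" by (simp add: PP_def)
  also have "\<dots> = X - X * X ^ (q - 1) / y ^ (q - 1)" by (simp add: algebra_simps power_divide)
  also have "X * X ^ (q - 1) = X ^ q"
  proof -
    have "q = Suc (q - 1)" using q_ge2 by simp
    hence "X ^ q = X ^ Suc (q - 1)" by simp
    thus ?thesis by simp
  qed
  finally show ?thesis .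
qed

end


locale cinfw = cinf q N T for q :: nat and N :: "'c::field \<Rightarrow> real" and T :: 'c +
  fixes w :: 'c and l :: nat
  assumes Nw: "N w = real q ^ l" and Nwi: "abs_i q N T w = real q ^ l"
begin

abbreviation LL :: "'c set" where "LL \<equiv> latt q T w"

lemma LL_iff: "x \<in> LL \<longleftrightarrow> (\<exists>a b. a \<in> AA \<and> b \<in> AA \<and> x = a * w + b)"
  by (auto simp: latt_def)

lemma ql_ge1: "real q ^ l \<ge> 1" using q_gt1 by simp

lemma dist_K: "x \<in> Kinf q N T \<Longrightarrow> real q ^ l \<le> N (w - x)"
proof -
  assume x: "x \<in> Kinf q N T"
  have "Inf {N (w - x) | x. x \<in> Kinf q N T} \<le> N (w - x)"
    by (rule cInf_lower) (use x N_nonneg in \<open>auto intro!: bdd_belowI[of _ 0]\<close>)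
  thus ?thesis using Nwi by (simp add: abs_i_def)
qed

lemma N_latt: "a \<in> AA \<Longrightarrow> b \<in> AA \<Longrightarrow> N (a * w + b) = max (N a * real q ^ l) (N b)"
proof (cases "a = 0")
  case True
  assume "b \<in> AA"
  thus ?thesis using True N_nonneg[of b] by simp
next
  case False
  assume a: "a \<in> AA" and b: "b \<in> AA"
  have aw: "N (a * w) = N a * real q ^ l" by (simp add: N_mult Nw)
  show ?thesis
  proof (cases "N (a * w) = N b")
    case False
    thus ?thesis using N_add_max[OF False] aw by simp
  next
    case True
    have k: "- b / a \<in> Kinf q N T" using AA_div_Kset[OF AA_uminus[OF b] a False] Kset_Kinf by blast
    have "a * w + b = a * (w - (- b / a))" using False by (simp add: field_simps)
    hence "N (a * w + b) = N a * N (w - (- b / a))" by (simp add: N_mult)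
    also have "\<dots> \<ge> N a * real q ^ l" using dist_K[OF k] N_nonneg[of a] by (simp add: mult_left_mono)
    finally have "N (a * w + b) \<ge> N a * real q ^ l" .
    moreover have "N (a * w + b) \<le> max (N (a * w)) (N b)" by (rule N_ultra)
    ultimately show ?thesis using True aw by simp
  qed
qed

lemma latt_unique:
  assumes "a \<in> AA" "b \<in> AA" "a' \<in> AA" "b' \<in> AA" "a * w + b = a' * w + b'"
  shows "a = a' \<and> b = b'"
proof -
  have "(a - a') * w + (b - b') = 0" using assms(5) by (simp add: algebra_simps)
  hence "max (N (a - a') * real q ^ l) (N (b - b')) = 0"
    using N_latt[OF AA_diff[OF assms(1,3)] AA_diff[OF assms(2,4)]] by simp
  moreover have "N (a - a') * real q ^ l \<ge> 0" using N_nonneg[of "a - a'"] ql_ge1 by simp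
  moreover have "N (b - b') \<ge> 0" by (rule N_nonneg)
  ultimately have "N (a - a') * real q ^ l = 0" "N (b - b') = 0"
    using max.cobounded1[of "N (a - a') * real q ^ l" "N (b - b')"] max.cobounded2[of "N (a - a') * real q ^ l" "N (b - b')"]
    by linarith+
  moreover have "real q ^ l \<noteq> 0" using ql_ge1 by linarith
  ultimately show ?thesis using q_ge2 by (simp add: N_zero)
qed

lemma LL_0[simp]: "0 \<in> LL" unfolding LL_iff by (rule exI[of _ 0], rule exI[of _ 0]) simp

lemma AA_LL: "b \<in> AA \<Longrightarrow> b \<in> LL" unfolding LL_iff by (rule exI[of _ 0], rule exI[of _ b]) simp

lemma LL_add: "x \<in> LL \<Longrightarrow> y \<in> LL \<Longrightarrow> x + y \<in> LL"
proof -
  assume "x \<in> LL" "y \<in> LL"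
  then obtain a b c d where "a \<in> AA" "b \<in> AA" "c \<in> AA" "d \<in> AA" "x = a * w + b" "y = c * w + d"
    unfolding LL_iff by blast
  thus ?thesis unfolding LL_iff
    by (intro exI[of _ "a + c"] exI[of _ "b + d"]) (auto simp: AA_add algebra_simps)
qed

lemma LL_smultA: "c \<in> AA \<Longrightarrow> x \<in> LL \<Longrightarrow> c * x \<in> LL"
proof -
  assume c: "c \<in> AA" and "x \<in> LL"
  then obtain a b where "a \<in> AA" "b \<in> AA" "x = a * w + b" unfolding LL_iff by blast
  thus ?thesis unfolding LL_iff using c
    by (intro exI[of _ "c * a"] exI[of _ "c * b"]) (auto simp: AA_mult algebra_simps)
qed

lemma LL_smult: "c \<in> FF \<Longrightarrow> x \<in> LL \<Longrightarrow> c * x \<in> LL"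
  using LL_smultA AA_const by blast

lemma LL_uminus: "x \<in> LL \<Longrightarrow> - x \<in> LL"
  using LL_smult[OF Fq_uminus[OF Fq_1]] by fastforce

lemma LL_diff: "x \<in> LL \<Longrightarrow> y \<in> LL \<Longrightarrow> x - y \<in> LL"
  using LL_add LL_uminus by (metis diff_conv_add_uminus)

lemma LL_ge1: "x \<in> LL \<Longrightarrow> x \<noteq> 0 \<Longrightarrow> N x \<ge> 1"
proof -
  assume "x \<in> LL" "x \<noteq> 0"
  then obtain a b where ab: "a \<in> AA" "b \<in> AA" "x = a * w + b" unfolding LL_iff by blast
  show ?thesis
  proof (cases "a = 0")
    case True
    thus ?thesis using ab AA_N_ge1 \<open>x \<noteq> 0\<close> N_latt by simp
  next
    case False
    have "N a * real q ^ l \<ge> 1 * 1" using AA_N_ge1[OF ab(1) False] ql_ge1 by (intro mult_mono) auto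
    thus ?thesis using N_latt[OF ab(1,2)] ab(3) by simp
  qed
qed

definition Lam :: "real \<Rightarrow> 'c set" where "Lam R = {x \<in> LL. N x \<le> R}"

lemma finite_Lam: "finite (Lam R)"
proof -
  obtain s where s: "R < real q ^ s" using real_arch_pow[OF q_gt1] by blast
  have "Lam R \<subseteq> (\<lambda>(a,b). a * w + b) ` (As s \<times> As s)"
  proof
    fix x assume "x \<in> Lam R"
    then obtain a b where ab: "a \<in> AA" "b \<in> AA" "x = a * w + b" "N x \<le> R"
      unfolding Lam_def LL_iff by blast
    have "N a \<le> N a * real q ^ l" using N_nonneg[of a] ql_ge1 by (simp add: mult_le_cancel_left1)
    hence "N a < real q ^ s" "N b < real q ^ s" using N_latt[OF ab(1,2)] ab s by auto
    thus "x \<in> (\<lambda>(a,b). a * w + b) ` (As s \<times> As s)" using ab by (force simp: As_def)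
  qed
  moreover have "finite (As s \<times> As s)" using card_As by simp
  ultimately show ?thesis by (meson finite_surj)
qed

lemma subsp_Lam: "R \<ge> 0 \<Longrightarrow> subsp (Lam R)"
  unfolding subsp_def
proof (intro conjI ballI)
  assume R: "R \<ge> 0"
  show "finite (Lam R)" by (rule finite_Lam)
  show "0 \<in> Lam R" using R by (simp add: Lam_def)
next
  fix x y assume "x \<in> Lam R" "y \<in> Lam R"
  thus "x + y \<in> Lam R" using N_ultra[of x y] LL_add by (auto simp: Lam_def)
next
  fix c x assume "c \<in> FF" "x \<in> Lam R"
  moreover have "N (c * x) \<le> N x" using Fq_N_le[OF \<open>c\<in>FF\<close>] N_nonneg[of x]
    by (simp add: N_mult mult_left_le_one_le N_nonneg)
  ultimately show "c * x \<in> Lam R" using LL_smult by (auto simp: Lam_def)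
qed

lemma Lam_small: "R < 1 \<Longrightarrow> Lam R \<subseteq> {0}"
  using LL_ge1 by (force simp: Lam_def)

end


context cinf begin

lemma conv_unique: "conv_to N X a \<Longrightarrow> conv_to N X b \<Longrightarrow> a = b"
proof (rule ccontr)
  assume ca: "conv_to N X a" and cb: "conv_to N X b" and ne: "a \<noteq> b"
  define e where "e = N (a - b)"
  have e: "e > 0" using ne N_pos e_def by simp
  obtain M1 where M1: "\<forall>n\<ge>M1. N (X n - a) < e" using ca e unfolding conv_to_def by blast
  obtain M2 where M2: "\<forall>n\<ge>M2. N (X n - b) < e" using cb e unfolding conv_to_def by blast
  define n where "n = max M1 M2"
  have "N (X n - a) < e" "N (X n - b) < e" using M1 M2 n_def by auto
  moreover have "a - b = (X n - b) - (X n - a)" by simp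
  hence "e \<le> max (N (X n - b)) (N (X n - a))" using N_diff e_def by metis
  ultimately show False by linarith
qed

lemma conv_const: "conv_to N (\<lambda>_. c) c"
  unfolding conv_to_def by simp

lemma conv_add: "conv_to N X a \<Longrightarrow> conv_to N Y b \<Longrightarrow> conv_to N (\<lambda>n. X n + Y n) (a + b)"
  unfolding conv_to_def
proof (intro allI impI)
  fix e :: real assume e: "e > 0"
  assume "\<forall>e>0. \<exists>M. \<forall>n\<ge>M. N (X n - a) < e" "\<forall>e>0. \<exists>M. \<forall>n\<ge>M. N (Y n - b) < e"
  then obtain M1 M2 where "\<forall>n\<ge>M1. N (X n - a) < e" "\<forall>n\<ge>M2. N (Y n - b) < e" using e by blast
  hence "\<forall>n\<ge>max M1 M2. N (X n + Y n - (a + b)) < e"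
    using N_ultra by (smt (verit) add_diff_add max.boundedE)
  thus "\<exists>M. \<forall>n\<ge>M. N (X n + Y n - (a + b)) < e" by blast
qed

lemma conv_scale: "conv_to N X a \<Longrightarrow> conv_to N (\<lambda>n. c * X n) (c * a)"
  unfolding conv_to_def
proof (intro allI impI)
  fix e :: real assume e: "e > 0"
  assume h: "\<forall>e>0. \<exists>M. \<forall>n\<ge>M. N (X n - a) < e"
  have e': "e / (N c + 1) > 0" using e N_nonneg[of c] by simp
  then obtain M where M: "\<forall>n\<ge>M. N (X n - a) < e / (N c + 1)" using h by blast
  have "\<forall>n\<ge>M. N (c * X n - c * a) < e"
  proof (intro allI impI)
    fix n assume "n \<ge> M"
    hence "N (X n - a) < e / (N c + 1)" using M by simp
    hence "N (X n - a) * (N c + 1) < e" using N_nonneg[of c] by (simp add: field_simps)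
    moreover have "N (c * X n - c * a) = N c * N (X n - a)" by (simp add: N_mult[symmetric] algebra_simps)
    moreover have "N c * N (X n - a) \<le> N (X n - a) * (N c + 1)" using N_nonneg[of "X n - a"] by (simp add: algebra_simps)
    ultimately show "N (c * X n - c * a) < e" by linarith
  qed
  thus "\<exists>M. \<forall>n\<ge>M. N (c * X n - c * a) < e" by blast
qed

lemma conv_bounded: "conv_to N X a \<Longrightarrow> \<exists>M. \<forall>n\<ge>M. N (X n) \<le> max (N a) 1"
proof -
  assume "conv_to N X a"
  then obtain M where M: "\<forall>n\<ge>M. N (X n - a) < 1" unfolding conv_to_def by (meson zero_less_one)
  have "\<forall>n\<ge>M. N (X n) \<le> max (N a) 1"
  proof (intro allI impI)
    fix n assume "n \<ge> M"
    have "X n = (X n - a) + a" by simp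
    hence "N (X n) \<le> max (N (X n - a)) (N a)" using N_ultra by metis
    thus "N (X n) \<le> max (N a) 1" using M \<open>n \<ge> M\<close> by fastforce
  qed
  thus ?thesis by blast
qed

lemma conv_mult: "conv_to N X a \<Longrightarrow> conv_to N Y b \<Longrightarrow> conv_to N (\<lambda>n. X n * Y n) (a * b)"
proof -
  assume cX: "conv_to N X a" and cY: "conv_to N Y b"
  obtain M0 where M0: "\<forall>n\<ge>M0. N (X n) \<le> max (N a) 1" using conv_bounded[OF cX] by blast
  define B where "B = max (N a) 1"
  have B: "B > 0" using B_def by simp
  have c1: "conv_to N (\<lambda>n. b * X n) (b * a)" by (rule conv_scale[OF cX])
  show ?thesis unfolding conv_to_def
  proof (intro allI impI)
    fix e :: real assume e: "e > 0"
    obtain M1 where M1: "\<forall>n\<ge>M1. N (b * X n - b * a) < e" using c1 e unfolding conv_to_def by blast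
    obtain M2 where M2: "\<forall>n\<ge>M2. N (Y n - b) < e / B" using cY e B unfolding conv_to_def by (meson divide_pos_pos)
    have "\<forall>n\<ge>max M0 (max M1 M2). N (X n * Y n - a * b) < e"
    proof (intro allI impI)
      fix n assume n: "n \<ge> max M0 (max M1 M2)"
      have eq: "X n * Y n - a * b = X n * (Y n - b) + (b * X n - b * a)" by (simp add: algebra_simps)
      have "N (X n * (Y n - b)) = N (X n) * N (Y n - b)" by (rule N_mult)
      also have "\<dots> \<le> B * N (Y n - b)" using M0 n B_def N_nonneg by (intro mult_right_mono) auto
      also have "\<dots> < B * (e / B)" using M2 n B by (intro mult_strict_left_mono) auto
      also have "\<dots> = e" using B by simp
      finally have "N (X n * (Y n - b)) < e" .
      moreover have "N (b * X n - b * a) < e" using M1 n by simp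
      moreover have "N (X n * Y n - a * b) \<le> max (N (X n * (Y n - b))) (N (b * X n - b * a))"
        unfolding eq by (rule N_ultra)
      ultimately show "N (X n * Y n - a * b) < e" by linarith
    qed
    thus "\<exists>M. \<forall>n\<ge>M. N (X n * Y n - a * b) < e" by blast
  qed
qed

lemma conv_power: "conv_to N X a \<Longrightarrow> conv_to N (\<lambda>n. X n ^ k) (a ^ k)"
  by (induction k) (simp_all add: conv_const conv_mult)

lemma conv_uminus: "conv_to N X a \<Longrightarrow> conv_to N (\<lambda>n. - X n) (- a)"
  using conv_scale[of X a "-1"] by simp

lemma conv_diff: "conv_to N X a \<Longrightarrow> conv_to N Y b \<Longrightarrow> conv_to N (\<lambda>n. X n - Y n) (a - b)"
  using conv_add[of X a "\<lambda>n. - Y n" "-b"] conv_uminus[of Y b] by simp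

lemma conv_inverse: "conv_to N X a \<Longrightarrow> a \<noteq> 0 \<Longrightarrow> conv_to N (\<lambda>n. inverse (X n)) (inverse a)"
proof -
  assume cX: "conv_to N X a" and a: "a \<noteq> 0"
  have Na: "N a > 0" using a N_pos by simp
  obtain M0 where M0: "\<forall>n\<ge>M0. N (X n - a) < N a" using cX Na unfolding conv_to_def by blast
  have NX: "\<And>n. n \<ge> M0 \<Longrightarrow> N (X n) = N a"
  proof -
    fix n assume "n \<ge> M0"
    hence "N (X n - a) < N a" using M0 by simp
    moreover have "X n = (X n - a) + a" by simp
    ultimately show "N (X n) = N a" using N_add_eq by metis
  qed
  show ?thesis unfolding conv_to_def
  proof (intro allI impI)
    fix e :: real assume e: "e > 0"
    obtain M1 where M1: "\<forall>n\<ge>M1. N (X n - a) < e * (N a * N a)" using cX e Na unfolding conv_to_def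
      by (meson mult_pos_pos)
    have "\<forall>n\<ge>max M0 M1. N (inverse (X n) - inverse a) < e"
    proof (intro allI impI)
      fix n assume n: "n \<ge> max M0 M1"
      hence xa: "N (X n) = N a" using NX by simp
      hence xn: "X n \<noteq> 0" using Na N_zero by auto
      have "inverse (X n) - inverse a = (a - X n) / (X n * a)" using xn a by (simp add: field_simps)
      hence "N (inverse (X n) - inverse a) = N (X n - a) / (N a * N a)"
        by (simp add: N_divide N_mult xa N_diff_comm)
      also have "\<dots> < e" using M1 n Na by (simp add: divide_less_eq)
      finally show "N (inverse (X n) - inverse a) < e" .
    qed
    thus "\<exists>M. \<forall>n\<ge>M. N (inverse (X n) - inverse a) < e" by blast
  qed
qed

lemma conv_divide: "conv_to N X a \<Longrightarrow> conv_to N Y b \<Longrightarrow> b \<noteq> 0 \<Longrightarrow> conv_to N (\<lambda>n. X n / Y n) (a / b)"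
  using conv_mult[OF _ conv_inverse] by (simp add: divide_inverse)

lemma conv_subseq: "conv_to N X a \<Longrightarrow> (\<And>k. f k \<ge> k) \<Longrightarrow> conv_to N (\<lambda>k. X (f k)) a"
  unfolding conv_to_def by (meson order_trans)

lemma conv_norm: "conv_to N X a \<Longrightarrow> (\<And>n. n \<ge> K \<Longrightarrow> N (X n) = B) \<Longrightarrow> N a = B"
proof -
  assume cX: "conv_to N X a" and K: "\<And>n. n \<ge> K \<Longrightarrow> N (X n) = B"
  show "N a = B"
  proof (cases "B = 0")
    case True
    hence "\<And>n. n \<ge> K \<Longrightarrow> X n = 0" using K N_zero by blast
    hence "conv_to N X 0" unfolding conv_to_def by (metis diff_zero N_0 nle_le)
    hence "a = 0" using conv_unique cX by blast
    thus ?thesis using True by simp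
  next
    case False
    hence B: "B > 0" using K[of K] N_nonneg[of "X K"] by simp
    then obtain M where M: "\<forall>n\<ge>M. N (X n - a) < B" using cX unfolding conv_to_def by blast
    define n where "n = max M K"
    have "N (X n - a) < B" "N (X n) = B" using M K n_def by auto
    moreover have "a = X n - (X n - a)" by simp
    ultimately show "N a = B" using N_diff_eq by metis
  qed
qed

lemma N_prod: "N (prod f S) = (\<Prod>i\<in>S. N (f i))"
  by (induction S rule: infinite_finite_induct) (auto simp: N_one N_mult)

lemma prod_near1: "finite S \<Longrightarrow> (\<And>i. i \<in> S \<Longrightarrow> N (e i) \<le> d) \<Longrightarrow> 0 \<le> d \<Longrightarrow> d \<le> 1
   \<Longrightarrow> N ((\<Prod>i\<in>S. (1 + e i)) - 1) \<le> d"
proof (induction S rule: finite_induct)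
  case empty then show ?case by simp
next
  case (insert x F)
  define P where "P = (\<Prod>i\<in>F. (1 + e i))"
  have IH: "N (P - 1) \<le> d" using insert P_def by simp
  have NP: "N P \<le> 1"
  proof -
    have "P = 1 + (P - 1)" by simp
    hence "N P \<le> max (N 1) (N (P - 1))" using N_ultra by metis
    thus ?thesis using IH insert N_one by simp
  qed
  have ex: "N (e x) \<le> d" using insert by simp
  have "(\<Prod>i\<in>insert x F. (1 + e i)) - 1 = (P - 1) + e x * P" using insert P_def by (simp add: algebra_simps)
  moreover have "N (e x * P) \<le> d" using ex NP N_nonneg[of "e x"] N_nonneg[of P] insert
    by (simp add: N_mult) (metis mult_mono mult.right_neutral)
  ultimately have "N ((\<Prod>i\<in>insert x F. (1 + e i)) - 1) \<le> max (N (P - 1)) (N (e x * P))"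
    using N_ultra[of "P - 1" "e x * P"] by metis
  thus ?case using IH \<open>N (e x * P) \<le> d\<close> by linarith
qed

end

context cinfw begin

lemma Lam_mono: "R \<le> R' \<Longrightarrow> Lam R \<subseteq> Lam R'"
  by (auto simp: Lam_def)

lemma PP_ext:
  assumes "0 \<le> R" "R \<le> R'"
  shows "PP (Lam R') z = PP (Lam R) z * (\<Prod>x\<in>Lam R' - Lam R. (1 - z / x))"
proof -
  have z: "0 \<in> Lam R" using assms by (simp add: Lam_def)
  have "Lam R' - {0} = (Lam R - {0}) \<union> (Lam R' - Lam R)" using z Lam_mono[OF assms(2)] by auto
  moreover have "(\<Prod>x\<in>(Lam R - {0}) \<union> (Lam R' - Lam R). (1 - z / x))
      = (\<Prod>x\<in>Lam R - {0}. (1 - z / x)) * (\<Prod>x\<in>Lam R' - Lam R. (1 - z / x))"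
    by (rule prod.union_disjoint) (use finite_Lam in auto)
  ultimately show ?thesis by (simp add: PP_def mult.assoc)
qed

lemma tail_N1:
  assumes "0 < R" "N z \<le> R" "R \<le> R'"
  shows "N (\<Prod>x\<in>Lam R' - Lam R. (1 - z / x)) = 1"
proof -
  have "\<And>x. x \<in> Lam R' - Lam R \<Longrightarrow> N (1 - z / x) = 1"
  proof -
    fix x assume x: "x \<in> Lam R' - Lam R"
    hence "N x > R" using assms by (auto simp: Lam_def)
    hence "N (z / x) < 1" using assms by (simp add: N_divide divide_less_eq)
    hence "N (1 - z / x) = N 1" using N_diff_eq by (simp add: N_one)
    thus "N (1 - z / x) = 1" by (simp add: N_one)
  qed
  thus ?thesis by (simp add: N_prod)
qed

lemma tail_near1:
  assumes "0 < R" "N z \<le> R" "R \<le> R'"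
  shows "N ((\<Prod>x\<in>Lam R' - Lam R. (1 - z / x)) - 1) \<le> N z / R"
proof -
  have "N ((\<Prod>x\<in>Lam R' - Lam R. (1 + (- z / x))) - 1) \<le> N z / R"
  proof (rule prod_near1)
    show "finite (Lam R' - Lam R)" using finite_Lam by simp
    fix x assume x: "x \<in> Lam R' - Lam R"
    hence "N x > R" using assms by (auto simp: Lam_def)
    thus "N (- z / x) \<le> N z / R" using assms N_nonneg[of z]
      by (simp add: N_divide N_minus frac_le)
  qed (use assms N_nonneg[of z] in auto)
  thus ?thesis by simp
qed

lemma N_PP_stable:
  assumes "0 < R" "N z \<le> R" "R \<le> R'"
  shows "N (PP (Lam R') z) = N (PP (Lam R) z)"
  using PP_ext[of R R' z] tail_N1[OF assms] assms by (simp add: N_mult)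

lemma N_PP_stable2:
  assumes "0 < R" "N z \<le> R" "0 < R'" "N z \<le> R'"
  shows "N (PP (Lam R') z) = N (PP (Lam R) z)"
proof (cases "R \<le> R'")
  case True thus ?thesis using N_PP_stable assms by blast
next
  case False thus ?thesis using N_PP_stable[of R' z R] assms by simp
qed

definition Pk :: "'c \<Rightarrow> nat \<Rightarrow> 'c" where "Pk z k = PP (Lam (real k)) z"

lemma expL_seq: "(\<lambda>k. z * (\<Prod>x\<in>{x \<in> LL - {0}. N x \<le> real k}. (1 - z / x))) = Pk z"
proof
  fix k
  have "{x \<in> LL - {0}. N x \<le> real k} = Lam (real k) - {0}" by (auto simp: Lam_def)
  thus "z * (\<Prod>x\<in>{x \<in> LL - {0}. N x \<le> real k}. (1 - z / x)) = Pk z k" by (simp add: Pk_def PP_def)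
qed

lemma Pk_conv: "\<exists>L. conv_to N (Pk z) L"
proof (rule complete, intro allI impI)
  fix e :: real assume e: "e > 0"
  define R0 where "R0 = max (N z) 1"
  define M where "M = N (PP (Lam R0) z)"
  obtain K0 :: nat where K0: "R0 \<le> real K0" using real_arch_simple by blast
  obtain K1 :: nat where K1: "M * N z / e < real K1" using reals_Archimedean2 by blast
  define K where "K = max K0 K1"
  have R0: "R0 > 0" "N z \<le> R0" using R0_def by auto
  have key: "\<And>m n. K \<le> m \<Longrightarrow> m \<le> n \<Longrightarrow> N (Pk z n - Pk z m) < e"
  proof -
    fix m n :: nat assume m: "K \<le> m" and mn: "m \<le> n"
    have mpos: "real m \<ge> R0" using m K0 K_def by simp
    hence m0: "real m > 0" using R0 by simp
    have Nz: "N z \<le> real m" using mpos R0 by simp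
    have e1: "Pk z n = Pk z m * (\<Prod>x\<in>Lam (real n) - Lam (real m). (1 - z / x))"
      unfolding Pk_def using PP_ext[of "real m" "real n" z] mn by simp
    have "Pk z n - Pk z m = Pk z m * ((\<Prod>x\<in>Lam (real n) - Lam (real m). (1 - z / x)) - 1)"
      using e1 by (simp add: algebra_simps)
    hence "N (Pk z n - Pk z m) = N (Pk z m) * N ((\<Prod>x\<in>Lam (real n) - Lam (real m). (1 - z / x)) - 1)"
      by (simp add: N_mult)
    also have "N (Pk z m) = M" unfolding Pk_def M_def using N_PP_stable[OF R0 mpos] .
    also have "M * N ((\<Prod>x\<in>Lam (real n) - Lam (real m). (1 - z / x)) - 1) \<le> M * (N z / real m)"
      using tail_near1[OF m0 Nz, of "real n"] mn M_def N_nonneg by (intro mult_left_mono) auto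
    also have "\<dots> < e"
    proof -
      have "real m \<ge> real K1" using m K_def by simp
      hence "M * N z / e < real m" using K1 by linarith
      hence "M * N z < e * real m" using e by (simp add: divide_less_eq mult.commute)
      thus ?thesis using m0 by (simp add: divide_less_eq)
    qed
    finally show "N (Pk z n - Pk z m) < e" .
  qed
  show "\<exists>M. \<forall>m\<ge>M. \<forall>n\<ge>M. N (Pk z m - Pk z n) < e"
  proof (intro exI allI impI)
    fix m n assume "K \<le> m" "K \<le> n"
    thus "N (Pk z m - Pk z n) < e"
      using key[of m n] key[of n m] N_diff_comm[of "Pk z m" "Pk z n"] by (cases "m \<le> n") auto
  qed
qed

abbreviation E :: "'c \<Rightarrow> 'c" where "E \<equiv> expL N LL"

lemma expL_conv: "conv_to N (Pk z) (E z)"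
proof -
  obtain L where L: "conv_to N (Pk z) L" using Pk_conv by blast
  have "E z = (THE v. conv_to N (Pk z) v)" unfolding expL_def expL_seq by simp
  also have "\<dots> = L" using L conv_unique by blast
  finally show ?thesis using L by simp
qed

lemma expL_N:
  assumes "0 < R" "N z \<le> R"
  shows "N (E z) = N (PP (Lam R) z)"
proof -
  obtain K :: nat where K: "R \<le> real K" using real_arch_simple by blast
  have "\<And>n. n \<ge> K \<Longrightarrow> N (Pk z n) = N (PP (Lam R) z)"
    unfolding Pk_def using N_PP_stable assms K by (meson of_nat_le_iff order_trans)
  thus ?thesis using conv_norm[OF expL_conv] by blast
qed

lemma expL_add: "E (x + y) = E x + E y"
proof -
  have "\<And>k. Pk (x + y) k = Pk x k + Pk y k" unfolding Pk_def
    by (rule PP_add[OF subsp_Lam]) simp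
  hence "Pk (x + y) = (\<lambda>n. Pk x n + Pk y n)" by (rule ext)
  hence "conv_to N (Pk (x + y)) (E x + E y)" using conv_add[OF expL_conv expL_conv, of x y]
    by simp
  thus ?thesis using expL_conv conv_unique by blast
qed

lemma expL_smult: "c \<in> FF \<Longrightarrow> E (c * x) = c * E x"
proof -
  assume c: "c \<in> FF"
  have "\<And>k. Pk (c * x) k = c * Pk x k" unfolding Pk_def
    by (rule PP_smult[OF subsp_Lam c]) simp
  hence "Pk (c * x) = (\<lambda>n. c * Pk x n)" by (rule ext)
  hence "conv_to N (Pk (c * x)) (c * E x)" using conv_scale[OF expL_conv[of x], of c] by simp
  thus ?thesis using expL_conv conv_unique by blast
qed

lemma expL_uminus: "E (- x) = - E x"
  using expL_smult[OF Fq_uminus[OF Fq_1], of x] by simp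

lemma expL_diff: "E (x - y) = E x - E y"
  using expL_add[of x "-y"] expL_uminus[of y] by simp

lemma expL_small: "N z < 1 \<Longrightarrow> N (E z) = N z"
proof (cases "z = 0")
  case True
  have "Pk 0 = (\<lambda>_. 0)" by (rule ext) (simp add: Pk_def)
  hence "conv_to N (Pk 0) 0" using conv_const[of 0] by simp
  hence "E 0 = 0" using expL_conv conv_unique by blast
  thus ?thesis using True by simp
next
  case False
  assume z1: "N z < 1"
  have zp: "N z > 0" using False N_pos by simp
  have "Lam (N z) = {0}" using Lam_small[OF z1] zp by (auto simp: Lam_def)
  hence "PP (Lam (N z)) z = z" by (simp add: PP_def)
  thus ?thesis using expL_N[OF zp] by simp
qed

end


context cinf begin

lemma As_mono: "As s \<subseteq> As (Suc s)"
proof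
  fix x assume "x \<in> As s"
  moreover have "real q ^ s \<le> real q ^ Suc s" using q_gt1 by (intro power_increasing) auto
  ultimately show "x \<in> As (Suc s)" by (auto simp: As_def)
qed

lemma pow_eq_from_bounds: "N b = real q ^ d \<Longrightarrow> real q ^ s \<le> N b \<Longrightarrow> N b < real q ^ Suc s \<Longrightarrow> d = s"
proof -
  assume a: "N b = real q ^ d" "real q ^ s \<le> N b" "N b < real q ^ Suc s"
  have "\<not> d < s"
  proof
    assume "d < s"
    hence "real q ^ d < real q ^ s" using q_gt1 by (intro power_strict_increasing) auto
    thus False using a by simp
  qed
  moreover have "d < Suc s"
  proof (rule ccontr)
    assume "\<not> d < Suc s"
    hence "real q ^ Suc s \<le> real q ^ d" using q_gt1 by (intro power_increasing) auto
    thus False using a by simp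
  qed
  ultimately show "d = s" by simp
qed

definition Sq :: "nat \<Rightarrow> nat" where "Sq s = (\<Sum>t\<in>{1..s}. q ^ t)"

lemma count_prod: "real q ^ s * (\<Prod>b\<in>As s - {0}. real q ^ s / N b) = real q ^ Sq s"
proof (induction s)
  case 0 then show ?case by (simp add: As_0 Sq_def)
next
  case (Suc s)
  have finS: "finite (As (Suc s))" using card_As by simp
  have z0: "0 \<in> As s" using q_gt1 by (simp add: As_def)
  have dU: "As (Suc s) - {0} = (As s - {0}) \<union> (As (Suc s) - As s)" using As_mono z0 by auto
  have one: "\<And>b. b \<in> As (Suc s) - As s \<Longrightarrow> real q ^ s / N b = 1"
  proof -
    fix b assume b: "b \<in> As (Suc s) - As s"
    hence bA: "b \<in> AA" "N b < real q ^ Suc s" "\<not> N b < real q ^ s" by (auto simp: As_def)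
    have "b \<noteq> 0" using bA q_gt1 by auto
    then obtain d where d: "N b = real q ^ d" using AA_N bA by blast
    hence "d = s" using pow_eq_from_bounds bA by (simp add: not_less)
    thus "real q ^ s / N b = 1" using d q_gt1 by simp
  qed
  have "(\<Prod>b\<in>As (Suc s) - {0}. real q ^ s / N b)
      = (\<Prod>b\<in>As s - {0}. real q ^ s / N b) * (\<Prod>b\<in>As (Suc s) - As s. real q ^ s / N b)"
    unfolding dU by (rule prod.union_disjoint) (use finS card_As in auto)
  also have "(\<Prod>b\<in>As (Suc s) - As s. real q ^ s / N b) = (\<Prod>b\<in>As (Suc s) - As s. 1)"
    using one by (rule prod.cong[OF refl])
  also have "(\<Prod>b\<in>As (Suc s) - As s. (1::real)) = 1" by simp
  finally have p1: "(\<Prod>b\<in>As (Suc s) - {0}. real q ^ s / N b) = (\<Prod>b\<in>As s - {0}. real q ^ s / N b)" by simp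
  have z1: "0 \<in> As (Suc s)" using q_gt1 by (simp add: As_def)
  have cd: "card (As (Suc s) - {0}) = q ^ Suc s - 1" using card_As[of "Suc s"] card_Diff_singleton[OF z1] by simp
  have "(\<Prod>b\<in>As (Suc s) - {0}. real q ^ Suc s / N b) = (\<Prod>b\<in>As (Suc s) - {0}. real q * (real q ^ s / N b))"
    by simp
  also have "\<dots> = real q ^ (q ^ Suc s - 1) * (\<Prod>b\<in>As s - {0}. real q ^ s / N b)"
    by (simp only: prod.distrib prod_constant cd p1)
  finally have "real q ^ Suc s * (\<Prod>b\<in>As (Suc s) - {0}. real q ^ Suc s / N b)
      = real q * real q ^ (q ^ Suc s - 1) * (real q ^ s * (\<Prod>b\<in>As s - {0}. real q ^ s / N b))"
    by simp
  also have "\<dots> = real q * real q ^ (q ^ Suc s - 1) * real q ^ Sq s" using Suc by simp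
  also have "\<dots> = real q ^ (Suc (q ^ Suc s - 1) + Sq s)" by (simp add: power_add)
  also have "Suc (q ^ Suc s - 1) = q ^ Suc s" using q_ge2 by simp
  also have "q ^ Suc s + Sq s = Sq (Suc s)" by (simp add: Sq_def)
  finally show ?case .
qed

end

context cinfw begin

lemma G_big:
  assumes a1: "a1 \<in> AA" "N a1 = real q ^ d1" and nA: "n \<in> AA" "N n = real q ^ dn"
    and a2: "a2 \<in> AA" "N a2 < N n" "N a2 \<le> N a1 * real q ^ l"
    and dd: "d1 < dn" "dn \<le> l + d1"
  shows "N ((a1 * w + a2) / n) = real q ^ (l + d1 - dn)"
    and "N (E ((a1 * w + a2) / n)) = real q ^ Sq (l + d1 - dn)"
proof -
  define u where "u = (a1 * w + a2) / n"
  define s where "s = l + d1 - dn"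
  have qpos: "real q > 0" using q_gt1 by simp
  have n0: "n \<noteq> 0" using nA qpos N_zero by auto
  have Nnum: "N (a1 * w + a2) = N a1 * real q ^ l" using N_latt[OF a1(1) a2(1)] a2 by simp
  have Nu: "N u = real q ^ s"
  proof -
    have "N u = real q ^ d1 * real q ^ l / real q ^ dn" using Nnum a1 nA by (simp add: u_def N_divide)
    also have "\<dots> = real q ^ (d1 + l) / real q ^ dn" by (simp add: power_add)
    also have "\<dots> = real q ^ s" using dd qpos by (simp add: s_def power_diff add.commute)
    finally show ?thesis .
  qed
  thus "N ((a1 * w + a2) / n) = real q ^ (l + d1 - dn)" by (simp add: u_def s_def)
  define R where "R = real q ^ s"
  have R0: "R > 0" using qpos R_def by simp
  have sl: "s < l" using dd s_def by simp
  have Rl: "R < real q ^ l" using R_def sl q_gt1 by simp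
  have eN: "N (E u) = N (PP (Lam R) u)" using expL_N[OF R0] Nu R_def by simp
  have dist: "\<And>x. x \<in> LL \<Longrightarrow> N (x - u) \<ge> N u"
  proof -
    fix x assume "x \<in> LL"
    then obtain a b where ab: "a \<in> AA" "b \<in> AA" "x = a * w + b" unfolding LL_iff by blast
    define c where "c = n * a - a1"
    have cA: "c \<in> AA" using ab a1 nA by (simp add: c_def AA_diff AA_mult)
    have Nc: "N c \<ge> N a1"
    proof (cases "a = 0")
      case True thus ?thesis by (simp add: c_def N_minus)
    next
      case False
      have "N (n * a) = N n * N a" by (rule N_mult)
      also have "\<dots> \<ge> N n * 1" using AA_N_ge1[OF ab(1) False] N_nonneg[of n] by (intro mult_left_mono) auto
      finally have na: "N (n * a) \<ge> N n" by simp
      have "N a1 < N n" using a1 nA dd q_gt1 by simp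
      hence "N c = N (n * a)" unfolding c_def using na by (intro N_diff_eq) simp
      thus ?thesis using na \<open>N a1 < N n\<close> by simp
    qed
    have eq: "n * (x - u) = c * w + (n * b - a2)" using n0 ab by (simp add: u_def c_def field_simps)
    have "N (n * (x - u)) = max (N c * real q ^ l) (N (n * b - a2))"
      unfolding eq by (rule N_latt[OF cA]) (simp add: AA_diff AA_mult ab nA a2)
    hence "N (n * (x - u)) \<ge> N a1 * real q ^ l" using Nc ql_ge1 by (smt (verit) mult_right_mono)
    hence "N n * N (x - u) \<ge> N a1 * real q ^ l" by (simp add: N_mult)
    moreover have "N u = N a1 * real q ^ l / N n" using Nnum by (simp add: u_def N_divide)
    moreover have "N n > 0" using nA qpos by simp
    ultimately show "N (x - u) \<ge> N u" by (simp add: divide_le_eq mult.commute)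
  qed
  have setA: "{x \<in> Lam R - {0}. N x < R} = As s - {0}"
  proof safe
    fix x assume x: "x \<in> Lam R" "x \<noteq> 0" "N x < R"
    then obtain a b where ab: "a \<in> AA" "b \<in> AA" "x = a * w + b" unfolding Lam_def LL_iff by blast
    have "a = 0"
    proof (rule ccontr)
      assume "a \<noteq> 0"
      hence "N a * real q ^ l \<ge> 1 * real q ^ l" using AA_N_ge1[OF ab(1)] ql_ge1 by (intro mult_right_mono) auto
      hence "N x \<ge> real q ^ l" using N_latt[OF ab(1,2)] ab(3) by simp
      thus False using x Rl by simp
    qed
    thus "x \<in> As s" using ab x R_def by (simp add: As_def)
  next
    fix x assume x: "x \<in> As s"
    thus "x \<in> Lam R" "N x < R" using AA_LL by (auto simp: As_def Lam_def R_def)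
  qed
  have setB: "\<And>x. x \<in> Lam R - {0} \<Longrightarrow> \<not> N x < R \<Longrightarrow> N (1 - u / x) = 1"
  proof -
    fix x assume x: "x \<in> Lam R - {0}" "\<not> N x < R"
    hence Nx: "N x = R" by (simp add: Lam_def)
    have "N (x - u) \<ge> R" using dist x Nu R_def by (simp add: Lam_def)
    moreover have "N (x - u) \<le> R" using N_diff[of x u] Nx Nu R_def by simp
    ultimately have "N (x - u) = R" by simp
    moreover have "1 - u / x = (x - u) / x" using x by (simp add: field_simps)
    ultimately show "N (1 - u / x) = 1" using Nx R0 by (simp add: N_divide)
  qed
  have setA': "\<And>x. x \<in> As s - {0} \<Longrightarrow> N (1 - u / x) = R / N x"
  proof -
    fix x assume x: "x \<in> As s - {0}"
    hence Nx: "N x < R" "x \<noteq> 0" by (auto simp: As_def R_def)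
    have "N (x - u) = R" using N_diff_eq'[of x u] Nx Nu R_def by simp
    moreover have "1 - u / x = (x - u) / x" using Nx by (simp add: field_simps)
    ultimately show "N (1 - u / x) = R / N x" by (simp add: N_divide)
  qed
  have finL: "finite (Lam R - {0})" using finite_Lam by simp
  define A where "A = {x \<in> Lam R - {0}. N x < R}"
  define B where "B = {x \<in> Lam R - {0}. \<not> N x < R}"
  have U: "Lam R - {0} = A \<union> B" by (auto simp: A_def B_def)
  have fA: "finite A" "finite B" using finL by (auto simp: A_def B_def)
  have "N (PP (Lam R) u) = N u * (\<Prod>x\<in>Lam R - {0}. N (1 - u / x))" by (simp add: PP_def N_mult N_prod)
  also have "(\<Prod>x\<in>Lam R - {0}. N (1 - u / x)) = (\<Prod>x\<in>A. N (1 - u / x)) * (\<Prod>x\<in>B. N (1 - u / x))"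
    unfolding U by (rule prod.union_disjoint) (use fA in \<open>auto simp: A_def B_def\<close>)
  also have "(\<Prod>x\<in>B. N (1 - u / x)) = (\<Prod>x\<in>B. 1)" using setB by (intro prod.cong) (auto simp: B_def)
  also have "(\<Prod>x\<in>A. N (1 - u / x)) = (\<Prod>x\<in>As s - {0}. R / N x)"
    unfolding A_def setA using setA' by (rule prod.cong[OF refl])
  finally have "N (PP (Lam R) u) = real q ^ s * (\<Prod>x\<in>As s - {0}. real q ^ s / N x)" using Nu R_def by simp
  also have "\<dots> = real q ^ Sq s" by (rule count_prod)
  finally show "N (E ((a1 * w + a2) / n)) = real q ^ Sq (l + d1 - dn)" using eN by (simp add: u_def s_def)
qed

end


context cinfw begin

definition WW :: "real \<Rightarrow> 'c set" where "WW R = {x. T * x \<in> LL \<and> N x \<le> R}"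

lemma N_divT: "N (x / T) = N x / real q" by (simp add: N_divide NT)

lemma WW_img: "WW R = (\<lambda>m. m / T) ` Lam (real q * R)"
proof safe
  fix x assume x: "x \<in> WW R"
  have "T * x \<in> Lam (real q * R)" using x q_gt1 by (simp add: WW_def Lam_def N_mult NT)
  moreover have "x = (T * x) / T" using T_nz by simp
  ultimately show "x \<in> (\<lambda>m. m / T) ` Lam (real q * R)" by blast
next
  fix m assume m: "m \<in> Lam (real q * R)"
  have "N (m / T) \<le> R" using m q_gt1 by (simp add: Lam_def N_divT divide_le_eq mult.commute)
  thus "m / T \<in> WW R" using m T_nz by (simp add: WW_def Lam_def)
qed

lemma subsp_WW: "R \<ge> 0 \<Longrightarrow> subsp (WW R)"
  unfolding subsp_def
proof (intro conjI ballI)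
  assume R: "R \<ge> 0"
  show "finite (WW R)" unfolding WW_img using finite_Lam by simp
  show "0 \<in> WW R" using R by (simp add: WW_def)
next
  fix x y assume "x \<in> WW R" "y \<in> WW R"
  thus "x + y \<in> WW R" using LL_add[of "T * x" "T * y"] N_ultra[of x y] by (auto simp: WW_def distrib_left)
next
  fix c x assume c: "c \<in> FF" and x: "x \<in> WW R"
  have "c * (T * x) \<in> LL" using LL_smult[OF c] x by (simp add: WW_def)
  hence "T * (c * x) \<in> LL" by (metis mult.left_commute)
  moreover have "N (c * x) \<le> N x" using Fq_N_le[OF c] N_nonneg[of x] by (simp add: N_mult mult_left_le_one_le N_nonneg)
  ultimately show "c * x \<in> WW R" using x LL_smult[OF c] by (auto simp: WW_def)
qed

lemma Lam_WW: "Lam R \<subseteq> WW R"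
  using LL_smultA[OF AA_T] by (auto simp: Lam_def WW_def)

lemma PP_T:
  assumes R: "R \<ge> 0"
  shows "PP (Lam (real q * R)) (T * z) = T * PP (WW R) z"
proof -
  have "(\<Prod>x\<in>WW R - {0}. (1 - z / x)) = (\<Prod>m\<in>Lam (real q * R) - {0}. (1 - T * z / m))"
  proof (rule prod.reindex_bij_witness[of "WW R - {0}" "\<lambda>m. m / T" "\<lambda>x. T * x"])
    fix x assume x: "x \<in> WW R - {0}"
    show "T * x / T = x" using T_nz by simp
    show "T * x \<in> Lam (real q * R) - {0}" using x T_nz WW_img by auto
    show "1 - T * z / (T * x) = 1 - z / x" using T_nz by simp
  next
    fix m assume m: "m \<in> Lam (real q * R) - {0}"
    show "T * (m / T) = m" using T_nz by simp
    show "m / T \<in> WW R - {0}" using m T_nz WW_img by auto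
  qed
  thus ?thesis by (simp add: PP_def mult.assoc)
qed

lemma N_c1c2: "c1 \<in> FF \<Longrightarrow> c2 \<in> FF \<Longrightarrow> N (c1 * w + c2) \<le> real q ^ l"
proof -
  assume c: "c1 \<in> FF" "c2 \<in> FF"
  have "N (c1 * w) \<le> real q ^ l" using Fq_N_le[OF c(1)] ql_ge1 N_nonneg[of c1] by (simp add: N_mult Nw mult_left_le_one_le)
  moreover have "N c2 \<le> real q ^ l" using Fq_N_le[OF c(2)] ql_ge1 by simp
  ultimately show ?thesis using N_ultra[of "c1 * w" c2] by simp
qed

lemma wT_in:
  assumes R: "R \<ge> real q ^ l" and c: "c1 \<in> FF" "c2 \<in> FF"
  shows "c1 * (w / T) + c2 * (1 / T) \<in> WW R"
proof -
  have e: "c1 * (w / T) + c2 * (1 / T) = (c1 * w + c2) / T" by (simp add: field_simps T_nz)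
  have "T * ((c1 * w + c2) / T) = c1 * w + c2" using T_nz by simp
  moreover have "c1 * w + c2 \<in> LL" unfolding LL_iff using c by (auto intro: AA_const)
  moreover have "N ((c1 * w + c2) / T) \<le> R"
  proof -
    have "N ((c1 * w + c2) / T) = N (c1 * w + c2) / real q" by (rule N_divT)
    also have "\<dots> \<le> N (c1 * w + c2)"
    proof -
      have "N (c1 * w + c2) * 1 \<le> N (c1 * w + c2) * real q" by (rule mult_left_mono) (use q_gt1 N_nonneg in auto)
      thus ?thesis using q_gt1 by (simp add: divide_le_eq)
    qed
    also have "\<dots> \<le> R" using N_c1c2[OF c] R by simp
    finally show ?thesis .
  qed
  ultimately show ?thesis unfolding e WW_def by simp
qed

lemma WW_decomp:
  assumes R: "R \<ge> real q ^ l" and x: "x \<in> WW R"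
  shows "\<exists>c1\<in>FF. \<exists>c2\<in>FF. \<exists>m\<in>Lam R. x = c1 * (w / T) + c2 * (1 / T) + m"
proof -
  obtain a b where ab: "a \<in> AA" "b \<in> AA" "T * x = a * w + b" using x unfolding WW_def LL_iff by blast
  obtain c1 a' where a': "c1 \<in> FF" "a' \<in> AA" "a = c1 + T * a'" using AA_decomp[OF ab(1)] by blast
  obtain c2 b' where b': "c2 \<in> FF" "b' \<in> AA" "b = c2 + T * b'" using AA_decomp[OF ab(2)] by blast
  define m where "m = a' * w + b'"
  have mL: "m \<in> LL" unfolding m_def LL_iff using a' b' by blast
  have xe: "x = c1 * (w / T) + c2 * (1 / T) + m"
  proof -
    have "T * x = T * (c1 * (w / T) + c2 * (1 / T) + m)" using ab a' b' T_nz by (simp add: m_def field_simps)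
    thus ?thesis using T_nz by simp
  qed
  have "N m \<le> R"
  proof -
    have "m = x - (c1 * (w / T) + c2 * (1 / T))" using xe by simp
    hence "N m \<le> max (N x) (N (c1 * (w / T) + c2 * (1 / T)))" using N_diff by metis
    moreover have "N x \<le> R" using x by (simp add: WW_def)
    moreover have "N (c1 * (w / T) + c2 * (1 / T)) \<le> R" using wT_in[OF R a'(1) b'(1)] by (simp add: WW_def)
    ultimately show ?thesis by simp
  qed
  thus ?thesis using mL xe a'(1) b'(1) by (auto simp: Lam_def)
qed

lemma inv_T_notin: "1 / T \<notin> LL"
proof
  assume "1 / T \<in> LL"
  moreover have "1 / T \<noteq> 0" using T_nz by simp
  ultimately have "N (1 / T) \<ge> 1" using LL_ge1 by blast
  moreover have "N (1 / T) < 1" using q_gt1 by (simp add: N_divT N_one)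
  ultimately show False by simp
qed

lemma wc_notin: "c \<in> FF \<Longrightarrow> (w - c) / T \<notin> LL"
proof
  assume c: "c \<in> FF" and "(w - c) / T \<in> LL"
  then obtain a b where ab: "a \<in> AA" "b \<in> AA" "(w - c) / T = a * w + b" unfolding LL_iff by blast
  hence "1 * w + (- c) = (T * a) * w + T * b" using T_nz by (simp add: field_simps)
  hence "1 = T * a" using latt_unique[of 1 "-c" "T * a" "T * b"] AA_uminus[OF AA_const[OF c]] ab AA_T AA_mult by simp
  hence "1 = real q * N a" using N_one by (metis N_mult NT)
  moreover have "a \<noteq> 0" using \<open>1 = T * a\<close> by auto
  hence "N a \<ge> 1" using AA_N_ge1 ab by simp
  moreover have "real q * N a \<ge> real q * 1" using \<open>N a \<ge> 1\<close> q_gt1 by (intro mult_left_mono) auto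
  ultimately show False using q_gt1 by linarith
qed

end


context cinf begin
lemma frob_diff: "(x - y :: 'c) ^ q = x ^ q - y ^ q"
proof -
  have "((x - y) + y) ^ q = (x - y) ^ q + y ^ q" by (rule frob)
  thus ?thesis by simp
qed
end

context cinfw begin

definition y1 :: "real \<Rightarrow> 'c" where "y1 R = PP (Lam R) (w / T)"
definition y2 :: "real \<Rightarrow> 'c" where "y2 R = PP (Lam R) (1 / T)"
definition GG :: "real \<Rightarrow> 'c" where "GG R = PP (line (y2 R)) (y1 R)"

lemma subsp_Lam': "R \<ge> real q ^ l \<Longrightarrow> subsp (Lam R)"
  using subsp_Lam ql_ge1 by simp

lemma y2_nz: "R \<ge> 0 \<Longrightarrow> y2 R \<noteq> 0"
  using PP_zero_iff[OF finite_Lam, of R "1/T"] inv_T_notin by (simp add: y2_def Lam_def)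

lemma PP_wT: "R \<ge> real q ^ l \<Longrightarrow> c1 \<in> FF \<Longrightarrow> c2 \<in> FF \<Longrightarrow>
   PP (Lam R) (c1 * (w / T) + c2 * (1 / T)) = c1 * y1 R + c2 * y2 R"
proof -
  assume R: "R \<ge> real q ^ l" and c: "c1 \<in> FF" "c2 \<in> FF"
  have sL: "subsp (Lam R)" using subsp_Lam'[OF R] .
  show ?thesis by (simp only: PP_add[OF sL] PP_smult[OF sL c(1)] PP_smult[OF sL c(2)] y1_def y2_def)
qed

lemma U_desc:
  assumes R: "R \<ge> real q ^ l"
  shows "PP (Lam R) ` WW R = {c1 * y1 R + c2 * y2 R | c1 c2. c1 \<in> FF \<and> c2 \<in> FF}"
proof safe
  fix x assume "x \<in> WW R"
  then obtain c1 c2 m where cm: "c1 \<in> FF" "c2 \<in> FF" "m \<in> Lam R" "x = c1 * (w / T) + c2 * (1 / T) + m"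
    using WW_decomp[OF R] by blast
  have "PP (Lam R) m = 0" using PP_zero_iff[OF finite_Lam subspD(2)[OF subsp_Lam'[OF R]], of m] cm(3) by simp
  hence "PP (Lam R) x = c1 * y1 R + c2 * y2 R"
    using cm PP_wT[OF R cm(1,2)] PP_add[OF subsp_Lam'[OF R]] by simp
  thus "\<exists>c1 c2. PP (Lam R) x = c1 * y1 R + c2 * y2 R \<and> c1 \<in> FF \<and> c2 \<in> FF" using cm by blast
next
  fix c1 c2 assume c: "c1 \<in> FF" "c2 \<in> FF"
  have "c1 * y1 R + c2 * y2 R = PP (Lam R) (c1 * (w / T) + c2 * (1 / T))" using PP_wT[OF R c] by simp
  thus "c1 * y1 R + c2 * y2 R \<in> PP (Lam R) ` WW R" using wT_in[OF R c] by blast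
qed

lemma G_nz: "R \<ge> real q ^ l \<Longrightarrow> GG R \<noteq> 0"
proof
  assume R: "R \<ge> real q ^ l" and G0: "GG R = 0"
  hence "y1 R \<in> line (y2 R)" using PP_zero_iff[of "line (y2 R)"] subspD(1,2)[OF subsp_line] by (simp add: GG_def)
  then obtain c where c: "c \<in> FF" "y1 R = c * y2 R" by (auto simp: line_def)
  have "PP (Lam R) ((w - c) / T) = PP (Lam R) (1 * (w / T) + (- c) * (1 / T))"
    by (simp add: diff_divide_distrib)
  also have "\<dots> = y1 R - c * y2 R" using PP_wT[OF R Fq_1 Fq_uminus[OF c(1)]] by simp
  also have "\<dots> = 0" using c by simp
  finally have "(w - c) / T \<in> Lam R" using PP_zero_iff[OF finite_Lam, of R] R ql_ge1 by (simp add: Lam_def)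
  thus False using wc_notin[OF c(1)] by (simp add: Lam_def)
qed

lemma compose:
  assumes R: "R \<ge> real q ^ l"
  shows "PP (WW R) z = PP (line (GG R)) (PP (line (y2 R)) (PP (Lam R) z))"
proof -
  have R0: "R \<ge> 0" using R ql_ge1 by simp
  define U where "U = PP (Lam R) ` WW R"
  have sU: "subsp U" unfolding U_def by (rule subsp_image[OF subsp_Lam[OF R0] subsp_WW[OF R0]])
  have e1: "PP (WW R) z = PP U (PP (Lam R) z)" unfolding U_def
    by (rule PP_comp[OF subsp_Lam[OF R0] subsp_WW[OF R0] Lam_WW])
  have sub: "line (y2 R) \<subseteq> U"
  proof
    fix x assume "x \<in> line (y2 R)"
    then obtain c where "c \<in> FF" "x = c * y2 R" by (auto simp: line_def)
    hence "x = 0 * y1 R + c * y2 R" by simp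
    thus "x \<in> U" unfolding U_def U_desc[OF R] using \<open>c \<in> FF\<close> Fq_0 by blast
  qed
  have e2: "PP U X = PP (PP (line (y2 R)) ` U) (PP (line (y2 R)) X)" for X
    by (rule PP_comp[OF subsp_line sU sub])
  have gy2: "PP (line (y2 R)) (y2 R) = 0"
    using PP_zero_iff[of "line (y2 R)" "y2 R"] subspD(1,2)[OF subsp_line]
    by (simp add: line_def) (metis Fq_1 image_eqI mult_1)
  have img: "PP (line (y2 R)) ` U = line (GG R)"
  proof safe
    fix x assume "x \<in> U"
    then obtain c1 c2 where c: "c1 \<in> FF" "c2 \<in> FF" "x = c1 * y1 R + c2 * y2 R" unfolding U_def U_desc[OF R] by blast
    have "PP (line (y2 R)) x = c1 * GG R"
      using c gy2 by (simp add: PP_add[OF subsp_line] PP_smult[OF subsp_line] GG_def)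
    thus "PP (line (y2 R)) x \<in> line (GG R)" using c by (auto simp: line_def)
  next
    fix x assume "x \<in> line (GG R)"
    then obtain c where c: "c \<in> FF" "x = c * GG R" by (auto simp: line_def)
    have "c * y1 R + 0 * y2 R \<in> U" unfolding U_def U_desc[OF R] using c(1) Fq_0 by blast
    moreover have "PP (line (y2 R)) (c * y1 R + 0 * y2 R) = x" using c by (simp add: PP_smult[OF subsp_line] GG_def)
    ultimately show "x \<in> PP (line (y2 R)) ` U" by (metis image_eqI)
  qed
  show ?thesis using e1 e2 img by simp
qed

lemma explicit:
  assumes R: "R \<ge> real q ^ l"
  defines "a \<equiv> y2 R ^ (q - 1)" and "b \<equiv> GG R ^ (q - 1)"
  shows "PP (Lam (real q * R)) (T * z) = T * PP (Lam R) z + (- T / a - T / b) * PP (Lam R) z ^ q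
           + T / (a ^ q * b) * PP (Lam R) z ^ (q ^ 2)"
proof -
  have R0: "R \<ge> 0" using R ql_ge1 by simp
  define X where "X = PP (Lam R) z"
  have a0: "a \<noteq> 0" using y2_nz[OF R0] by (simp add: a_def)
  have b0: "b \<noteq> 0" using G_nz[OF R] by (simp add: b_def)
  have g: "PP (line (y2 R)) X = X - X ^ q / a" using PP_line[OF y2_nz[OF R0]] by (simp add: a_def)
  have h: "PP (line (GG R)) Y = Y - Y ^ q / b" for Y using PP_line[OF G_nz[OF R]] by (simp add: b_def)
  have fq: "(X - X ^ q / a) ^ q = X ^ q - X ^ (q ^ 2) / a ^ q"
    by (simp add: frob_diff power_divide power_mult[symmetric] power2_eq_square)
  have "PP (Lam (real q * R)) (T * z) = T * PP (WW R) z" by (rule PP_T[OF R0])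
  also have "\<dots> = T * ((X - X ^ q / a) - (X ^ q - X ^ (q ^ 2) / a ^ q) / b)"
    using compose[OF R] g h fq by (simp add: X_def)
  also have "\<dots> = T * X + (- T / a - T / b) * X ^ q + T / (a ^ q * b) * X ^ (q ^ 2)"
    using a0 b0 by (simp add: field_simps)
  finally show ?thesis by (simp add: X_def)
qed

end


context cinf begin
lemma conv_ev: "conv_to N X a \<Longrightarrow> (\<And>k. k \<ge> K \<Longrightarrow> X k = Y k) \<Longrightarrow> conv_to N Y a"
  unfolding conv_to_def by (metis max.cobounded1 max.cobounded2 order_trans)
end

context cinfw begin

definition EN :: real where "EN = (if l = 0 then 1 / real q else real q ^ Sq (l - 1))"

lemma EN_pos: "EN > 0" using q_gt1 by (simp add: EN_def)

lemma EN_val: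
  assumes c: "c1 \<in> FF" "c1 \<noteq> 0" "c2 \<in> FF"
  shows "N (E ((c1 * w + c2) / T)) = EN"
proof (cases "l = 0")
  case True
  have "N (c1 * w + c2) = max (N c1 * real q ^ l) (N c2)" by (rule N_latt) (use c AA_const in auto)
  also have "\<dots> = 1" using True Fq_N[OF c(1,2)] Fq_N_le[OF c(3)] by simp
  finally have "N ((c1 * w + c2) / T) = 1 / real q" by (simp add: N_divT)
  moreover have "1 / real q < 1" using q_gt1 by simp
  moreover have "EN = 1 / real q" unfolding EN_def using True by simp
  ultimately show ?thesis using expL_small by simp
next
  case False
  have "N (E ((c1 * w + c2) / T)) = real q ^ Sq (l + 0 - 1)"
  proof (rule G_big(2))
    show "c1 \<in> AA" "c2 \<in> AA" "T \<in> AA" using c AA_const AA_T by auto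
    show "N c1 = real q ^ 0" using Fq_N[OF c(1,2)] by simp
    show "N T = real q ^ 1" by (simp add: NT)
    show "N c2 < N T" using Fq_N_le[OF c(3)] q_gt1 NT by simp
    show "N c2 \<le> N c1 * real q ^ l" using Fq_N_le[OF c(3)] Fq_N[OF c(1,2)] ql_ge1 by simp
    show "0 < (1::nat)" "1 \<le> l + 0" using False by auto
  qed
  moreover have "EN = real q ^ Sq (l - 1)" unfolding EN_def using False by simp
  ultimately show ?thesis by simp
qed

definition Y1 :: 'c where "Y1 = E (w / T)"
definition Y2 :: 'c where "Y2 = E (1 / T)"
definition GL :: 'c where "GL = Y1 - Y1 ^ q / Y2 ^ (q - 1)"

lemma NY2: "N Y2 = 1 / real q"
proof -
  have "N (1 / T) = 1 / real q" by (simp add: N_divT N_one)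
  thus ?thesis using expL_small q_gt1 by (simp add: Y2_def)
qed

lemma Y2_nz: "Y2 \<noteq> 0" using NY2 q_gt1 by auto

lemma NGL: "N GL = EN * (real q * EN) ^ (q - 1)"
proof -
  have "GL = PP (line Y2) Y1" using PP_line[OF Y2_nz] by (simp add: GL_def)
  also have "\<dots> = Y1 * (\<Prod>c\<in>FF - {0}. (1 - Y1 / (c * Y2)))"
  proof -
    have inj: "inj_on (\<lambda>c. c * Y2) (FF - {0})" using Y2_nz by (auto intro: inj_onI)
    have "line Y2 - {0} = (\<lambda>c. c * Y2) ` (FF - {0})" using Y2_nz by (auto simp: line_def)
    hence "(\<Prod>v\<in>line Y2 - {0}. (1 - Y1 / v)) = (\<Prod>c\<in>FF - {0}. (1 - Y1 / (c * Y2)))"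
      using prod.reindex[OF inj, of "\<lambda>v. 1 - Y1 / v"] by simp
    thus ?thesis by (simp add: PP_def)
  qed
  finally have "N GL = N Y1 * (\<Prod>c\<in>FF - {0}. N (1 - Y1 / (c * Y2)))" by (simp add: N_mult N_prod)
  also have "N Y1 = EN" using EN_val[OF Fq_1 _ Fq_0] by (simp add: Y1_def)
  also have "(\<Prod>c\<in>FF - {0}. N (1 - Y1 / (c * Y2))) = (\<Prod>c\<in>FF - {0}. real q * EN)"
  proof (rule prod.cong[OF refl])
    fix c assume c: "c \<in> FF - {0}"
    have cY: "c * Y2 \<noteq> 0" using c Y2_nz by simp
    have cF: "c \<in> FF" using c by simp
    have "c * Y2 - Y1 = E (c * (1 / T)) - E (w / T)" using expL_smult[OF cF, of "1/T"] by (simp add: Y2_def Y1_def)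
    also have "\<dots> = E (((-1) * w + c) / T)" by (simp add: expL_diff[symmetric] diff_divide_distrib)
    finally have "N (c * Y2 - Y1) = EN" using EN_val[OF Fq_uminus[OF Fq_1] _ ] c by simp
    moreover have "1 - Y1 / (c * Y2) = (c * Y2 - Y1) / (c * Y2)" using cY by (simp add: field_simps)
    moreover have "N (c * Y2) = 1 / real q" using c Fq_N NY2 by (simp add: N_mult)
    ultimately show "N (1 - Y1 / (c * Y2)) = real q * EN" by (simp add: N_divide)
  qed
  also have "\<dots> = (real q * EN) ^ (q - 1)" using card_Fq finite_Fq by (simp add: card_Diff_singleton)
  finally show ?thesis .
qed

lemma GL_nz: "GL \<noteq> 0"
proof
  assume "GL = 0"
  hence "N GL = 0" by simp
  moreover have "EN * (real q * EN) ^ (q - 1) > 0" using EN_pos q_gt1 by simp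
  ultimately show False using NGL by linarith
qed

definition AAc :: 'c where "AAc = Y2 ^ (q - 1)"
definition BBc :: 'c where "BBc = GL ^ (q - 1)"
definition DD :: 'c where "DD = T / (AAc ^ q * BBc)"
definition L1 :: 'c where "L1 = - T / AAc - T / BBc"

lemma AAc_nz: "AAc \<noteq> 0" using Y2_nz by (simp add: AAc_def)
lemma BBc_nz: "BBc \<noteq> 0" using GL_nz by (simp add: BBc_def)

lemma func_eq: "E (T * z) = T * E z + L1 * E z ^ q + DD * E z ^ (q ^ 2)"
proof -
  obtain K :: nat where K: "real q ^ l \<le> real K" using real_arch_simple by blast
  define ya where "ya k = y2 (real k) ^ (q - 1)" for k
  define yb where "yb k = GG (real k) ^ (q - 1)" for k
  define RHS where "RHS k = T * Pk z k + (- T / ya k - T / yb k) * Pk z k ^ q + T / (ya k ^ q * yb k) * Pk z k ^ (q ^ 2)" for k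
  have eqk: "\<And>k. k \<ge> K \<Longrightarrow> Pk (T * z) (q * k) = RHS k"
  proof -
    fix k assume "k \<ge> K"
    hence R: "real k \<ge> real q ^ l" using K by simp
    have "Pk (T * z) (q * k) = PP (Lam (real q * real k)) (T * z)" by (simp add: Pk_def)
    also have "\<dots> = RHS k" unfolding RHS_def ya_def yb_def Pk_def by (rule explicit[OF R])
    finally show "Pk (T * z) (q * k) = RHS k" .
  qed
  have c1: "conv_to N (\<lambda>k. Pk (T * z) (q * k)) (E (T * z))"
    by (rule conv_subseq[OF expL_conv]) (use q_ge2 in simp)
  hence c2: "conv_to N RHS (E (T * z))" using conv_ev eqk by blast
  have cy1: "conv_to N (\<lambda>k. y1 (real k)) Y1" using expL_conv by (simp add: y1_def Y1_def Pk_def[symmetric])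
  have cy2: "conv_to N (\<lambda>k. y2 (real k)) Y2" using expL_conv by (simp add: y2_def Y2_def Pk_def[symmetric])
  have cya: "conv_to N ya AAc" unfolding ya_def AAc_def by (rule conv_power[OF cy2])
  have Gk: "\<And>k. GG (real k) = y1 (real k) - y1 (real k) ^ q / y2 (real k) ^ (q - 1)"
    using PP_line y2_nz by (simp add: GG_def)
  have cG: "conv_to N (\<lambda>k. GG (real k)) GL"
    unfolding Gk GL_def by (intro conv_diff conv_divide conv_power cy1 cy2) (use Y2_nz in simp)
  have cyb: "conv_to N yb BBc" unfolding yb_def BBc_def by (rule conv_power[OF cG])
  have cX: "conv_to N (Pk z) (E z)" by (rule expL_conv)
  have c3: "conv_to N RHS (T * E z + L1 * E z ^ q + DD * E z ^ (q ^ 2))"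
    unfolding RHS_def L1_def DD_def
    by (intro conv_add conv_mult conv_diff conv_divide conv_power conv_const cX cya cyb conv_uminus)
       (use AAc_nz BBc_nz in simp_all)
  show ?thesis using conv_unique[OF c2 c3] .
qed

end


context cinfw begin

lemma E_inj_vals: "inj (\<lambda>j::nat. E (1 / T ^ Suc j))"
proof (rule injI)
  fix i j :: nat assume h: "E (1 / T ^ Suc i) = E (1 / T ^ Suc j)"
  have n: "\<And>k. N (E (1 / T ^ Suc k)) = 1 / real q ^ Suc k"
  proof -
    fix k :: nat
    have "N (T ^ Suc k) = real q ^ Suc k" by (rule N_T_pow)
    hence "N (1 / T ^ Suc k) = 1 / real q ^ Suc k" by (simp only: N_divide N_one)
    moreover have "1 / real q ^ Suc k < 1"
    proof -
      have "1 < real q ^ Suc k" by (rule one_less_power[OF q_gt1]) simp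
      thus ?thesis by simp
    qed
    ultimately show "N (E (1 / T ^ Suc k)) = 1 / real q ^ Suc k" using expL_small by simp
  qed
  have a: "N (E (1 / T ^ Suc i)) = N (E (1 / T ^ Suc j))" using h by (rule arg_cong)
  hence "1 / real q ^ Suc i = 1 / real q ^ Suc j" by (simp only: n)
  hence "real q ^ Suc i = real q ^ Suc j" by simp
  hence "Suc i = Suc j" using power_inject_exp[of "real q" "Suc i" "Suc j"] q_gt1 by blast
  thus "i = j" by simp
qed

lemma DeltaT_val: "DeltaT q N T LL = DD"
  unfolding DeltaT_def
proof (rule the_equality)
  show "\<exists>l1. \<forall>z. E (T * z) = T * E z + l1 * E z ^ q + DD * E z ^ (q ^ 2)"
    using func_eq by blast
next
  fix l2 assume "\<exists>l1. \<forall>z. E (T * z) = T * E z + l1 * E z ^ q + l2 * E z ^ (q ^ 2)"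
  then obtain l1 where l1: "\<And>z. E (T * z) = T * E z + l1 * E z ^ q + l2 * E z ^ (q ^ 2)" by blast
  define p where "p = monom (L1 - l1) q + monom (DD - l2) (q ^ 2)"
  have root: "\<And>z. poly p (E z) = 0"
  proof -
    fix z
    have "T * E z + L1 * E z ^ q + DD * E z ^ (q ^ 2) = T * E z + l1 * E z ^ q + l2 * E z ^ (q ^ 2)"
      using func_eq[of z] l1[of z] by simp
    thus "poly p (E z) = 0" by (simp add: p_def poly_monom algebra_simps)
  qed
  have "p = 0"
  proof (rule ccontr)
    assume "p \<noteq> 0"
    hence fin: "finite {x. poly p x = 0}" by (rule poly_roots_finite)
    have "range (\<lambda>j::nat. E (1 / T ^ Suc j)) \<subseteq> {x. poly p x = 0}" using root by auto
    hence "finite (range (\<lambda>j::nat. E (1 / T ^ Suc j)))" using fin finite_subset by blast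
    thus False using E_inj_vals range_inj_infinite by blast
  qed
  have "q \<noteq> q ^ 2" using q_ge2 by (simp add: power2_eq_square)
  have c1: "coeff p (q ^ 2) = DD - l2" using \<open>q \<noteq> q ^ 2\<close> by (simp add: p_def coeff_monom)
  have "coeff p (q ^ 2) = 0" using \<open>p = 0\<close> by simp
  thus "l2 = DD" using c1 by simp
qed

lemma Sq_id: "real (Sq m) * (real q - 1) = real q ^ Suc m - real q"
proof (induction m)
  case 0 then show ?case by (simp add: Sq_def)
next
  case (Suc m)
  have "Sq (Suc m) = Sq m + q ^ Suc m" by (simp add: Sq_def)
  hence "real (Sq (Suc m)) * (real q - 1) = real (Sq m) * (real q - 1) + real q ^ Suc m * (real q - 1)"
    by (simp add: algebra_simps)
  also have "\<dots> = real q ^ Suc (Suc m) - real q" using Suc by (simp add: algebra_simps)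
  finally show ?case .
qed

abbreviation LG :: "real \<Rightarrow> real" where "LG x \<equiv> log (real q) x"

lemma LG_q: "LG (real q) = 1" using q_gt1 by simp

lemma LG_pow: "LG (real q ^ n) = real n" using q_gt1 by (simp add: log_nat_power)

lemma LG_EN: "LG EN = (if l = 0 then -1 else real (Sq (l - 1)))"
  using q_gt1 by (simp add: EN_def log_divide LG_pow)

lemma log_Delta: "LG (N DD) = real q ^ 2 + real q - real q ^ (l + 1)"
proof -
  have qp: "real q > 0" "real q \<noteq> 1" using q_gt1 by auto
  have NA: "N AAc = (1 / real q) ^ (q - 1)" by (simp add: AAc_def N_power NY2)
  have NB: "N BBc = (EN * (real q * EN) ^ (q - 1)) ^ (q - 1)" by (simp add: BBc_def N_power NGL)
  have Apos: "N AAc > 0" using NA q_gt1 by simp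
  have Bpos: "N BBc > 0" using NB q_gt1 EN_pos by simp
  define e where "e = LG EN"
  have LA: "LG (N AAc) = - real (q - 1)" using qp by (simp add: NA log_nat_power log_divide)
  have LB: "LG (N BBc) = real (q - 1) * (e + real (q - 1) * (1 + e))"
    using qp EN_pos by (simp add: NB log_nat_power log_mult e_def)
  have "N DD = real q / (N AAc ^ q * N BBc)" by (simp add: DD_def N_divide N_mult N_power NT)
  hence "LG (N DD) = 1 - (real q * LG (N AAc) + LG (N BBc))"
    using qp Apos Bpos by (simp add: log_divide log_mult log_nat_power)
  also have "\<dots> = 1 + real q * real (q - 1) - real (q - 1) * (e + real (q - 1) * (1 + e))"
    using LA LB by simp
  also have "real (q - 1) = real q - 1" using q_ge2 by simp
  finally have L: "LG (N DD) = 1 + real q * (real q - 1) - (real q - 1) * (e + (real q - 1) * (1 + e))" .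
  have "\<dots> = real q - real q * ((real q - 1) * e)" by (simp add: algebra_simps)
  also have "\<dots> = real q ^ 2 + real q - real q ^ (l + 1)"
  proof (cases "l = 0")
    case True
    hence "e = -1" using LG_EN e_def by simp
    thus ?thesis using True by (simp add: algebra_simps power2_eq_square)
  next
    case False
    hence "e = real (Sq (l - 1))" using LG_EN e_def by simp
    hence X: "(real q - 1) * e = real q ^ l - real q" using Sq_id[of "l - 1"] False by (simp add: mult.commute)
    have "real q - real q * ((real q - 1) * e) = real q - real q * (real q ^ l - real q)" by (simp only: X)
    also have "\<dots> = real q ^ 2 + real q - real q * real q ^ l" by (simp add: algebra_simps power2_eq_square)
    also have "real q * real q ^ l = real q ^ (l + 1)" by simp
    finally show ?thesis .
  qed
  finally show ?thesis using L by simp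
qed

end


context cinfw begin

lemma logv_powr: "N x = real q powr r \<Longrightarrow> logv q N x = ereal r"
proof -
  assume h: "N x = real q powr r"
  hence "x \<noteq> 0" using q_gt1 by auto
  thus ?thesis using h q_gt1 by (simp add: logv_def)
qed

lemma pow_powr: "real q ^ k = real q powr real k" using q_gt1 by (simp add: powr_realpow)

lemma part_ii:
  assumes fn: "Fqp fn" and f1: "Fqp f1" and f2: "Fqp f2" and dn0: "degree fn > 0"
    and nz: "poly f1 T \<noteq> 0 \<or> poly f2 T \<noteq> 0"
    and d1: "degree f1 < degree fn" and d2: "degree f2 < degree fn"
  shows "(let u = (poly f1 T * w + poly f2 T) / poly fn T;
               d1 = real (degree f1); d2 = real (degree f2); dn = real (degree fn) in
           (poly f1 T \<noteq> 0 \<and> (poly f2 T = 0 \<or> d2 \<le> d1 + real l)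
              \<longrightarrow> logv q N u = ereal (real l + d1 - dn)) \<and>
           (poly f2 T \<noteq> 0 \<and> (poly f1 T = 0 \<or> d2 > d1 + real l)
              \<longrightarrow> logv q N u = ereal (d2 - dn)) \<and>
           (logv q N u \<ge> 0 \<longrightarrow> logv q N (expL N (latt q T w) u)
              = ereal (real q / (real q - 1) * (real q powr (real l + d1 - dn) - 1))) \<and>
           (logv q N u < 0 \<longrightarrow> logv q N (expL N (latt q T w) u) = logv q N u))"
proof -
  define a1 a2 n where "a1 = poly f1 T" "a2 = poly f2 T" "n = poly fn T"
  define k1 k2 kn where "k1 = degree f1" "k2 = degree f2" "kn = degree fn"
  define u where "u = (a1 * w + a2) / n"
  have qp: "real q > 0" using q_gt1 by simp
  have A: "a1 \<in> AA" "a2 \<in> AA" "n \<in> AA" using fn f1 f2 AA_iff a1_a2_n_def by auto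
  have fn0: "fn \<noteq> 0" using dn0 by auto
  have Nn: "N n = real q ^ kn" using N_polyT[OF fn fn0] a1_a2_n_def k1_k2_kn_def by simp
  have n0: "n \<noteq> 0" using Nn qp by auto
  have Na1: "a1 \<noteq> 0 \<Longrightarrow> N a1 = real q ^ k1"
  proof -
    assume "a1 \<noteq> 0"
    hence "f1 \<noteq> 0" using a1_a2_n_def by auto
    thus ?thesis using N_polyT[OF f1] a1_a2_n_def k1_k2_kn_def by simp
  qed
  have Na2: "a2 \<noteq> 0 \<Longrightarrow> N a2 = real q ^ k2"
  proof -
    assume "a2 \<noteq> 0"
    hence "f2 \<noteq> 0" using a1_a2_n_def by auto
    thus ?thesis using N_polyT[OF f2] a1_a2_n_def k1_k2_kn_def by simp
  qed
  have qmono: "\<And>i j. i < j \<Longrightarrow> real q ^ i < real q ^ j" using q_gt1 by (simp add: power_strict_increasing)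
  have a2n: "N a2 < N n"
    using Na2 Nn qmono d2 qp k1_k2_kn_def by (cases "a2 = 0") auto
  have Nnum: "N (a1 * w + a2) = max (N a1 * real q ^ l) (N a2)" by (rule N_latt[OF A(1,2)])
  have caseA: "a1 \<noteq> 0 \<Longrightarrow> (a2 = 0 \<or> real k2 \<le> real k1 + real l) \<Longrightarrow> N u = real q powr (real l + real k1 - real kn)"
  proof -
    assume a: "a1 \<noteq> 0" "a2 = 0 \<or> real k2 \<le> real k1 + real l"
    have "N a2 \<le> N a1 * real q ^ l"
    proof (cases "a2 = 0")
      case True thus ?thesis using N_nonneg[of a1] by simp
    next
      case False
      hence "k2 \<le> k1 + l" using a by simp
      hence "real q ^ k2 \<le> real q ^ (k1 + l)" using q_gt1 by (intro power_increasing) auto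
      thus ?thesis using Na1[OF a(1)] Na2[OF False] by (simp add: power_add)
    qed
    hence "N (a1 * w + a2) = real q ^ (k1 + l)" using Nnum Na1[OF a(1)] by (simp add: power_add)
    hence "N u = real q ^ (k1 + l) / real q ^ kn" using Nn by (simp add: u_def N_divide)
    also have "\<dots> = real q powr (real l + real k1 - real kn)"
      using qp by (simp add: pow_powr powr_diff[symmetric] add.commute)
    finally show ?thesis .
  qed
  have caseB: "a2 \<noteq> 0 \<Longrightarrow> (a1 = 0 \<or> real k2 > real k1 + real l) \<Longrightarrow> N u = real q powr (real k2 - real kn)"
  proof -
    assume a: "a2 \<noteq> 0" "a1 = 0 \<or> real k2 > real k1 + real l"
    have "N a1 * real q ^ l < N a2"
    proof (cases "a1 = 0")
      case True thus ?thesis using Na2[OF a(1)] qp by simp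
    next
      case False
      hence "k1 + l < k2" using a by simp
      hence "real q ^ (k1 + l) < real q ^ k2" using qmono by blast
      thus ?thesis using Na1[OF False] Na2[OF a(1)] by (simp add: power_add)
    qed
    hence "N (a1 * w + a2) = real q ^ k2" using Nnum Na2[OF a(1)] by simp
    hence "N u = real q ^ k2 / real q ^ kn" using Nn by (simp add: u_def N_divide)
    also have "\<dots> = real q powr (real k2 - real kn)" using qp by (simp add: pow_powr powr_diff[symmetric])
    finally show ?thesis .
  qed
  have u0: "u \<noteq> 0"
  proof -
    have "N (a1 * w + a2) > 0"
    proof (cases "a1 = 0")
      case True
      hence "a2 \<noteq> 0" using nz a1_a2_n_def by simp
      thus ?thesis using Nnum N_pos[of a2] by simp
    next
      case False
      have "N a1 * real q ^ l > 0" using N_pos[OF False] qp by simp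
      thus ?thesis using Nnum by simp
    qed
    thus ?thesis using n0 by (auto simp: u_def)
  qed
  have P1: "a1 \<noteq> 0 \<and> (a2 = 0 \<or> real k2 \<le> real k1 + real l) \<longrightarrow> logv q N u = ereal (real l + real k1 - real kn)"
    using caseA logv_powr by blast
  have P2: "a2 \<noteq> 0 \<and> (a1 = 0 \<or> real k2 > real k1 + real l) \<longrightarrow> logv q N u = ereal (real k2 - real kn)"
    using caseB logv_powr by blast
  have P3: "logv q N u \<ge> 0 \<longrightarrow> logv q N (E u) = ereal (real q / (real q - 1) * (real q powr (real l + real k1 - real kn) - 1))"
  proof
    assume lu: "logv q N u \<ge> 0"
    have A1: "a1 \<noteq> 0 \<and> (a2 = 0 \<or> real k2 \<le> real k1 + real l)"
    proof (rule ccontr)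
      assume "\<not> (a1 \<noteq> 0 \<and> (a2 = 0 \<or> real k2 \<le> real k1 + real l))"
      hence "a2 \<noteq> 0 \<and> (a1 = 0 \<or> real k2 > real k1 + real l)" using nz a1_a2_n_def by auto
      hence "logv q N u = ereal (real k2 - real kn)" using P2 by blast
      moreover have "real k2 < real kn" using d2 k1_k2_kn_def by simp
      ultimately show False using lu by simp
    qed
    hence lv: "logv q N u = ereal (real l + real k1 - real kn)" using P1 by blast
    hence le: "kn \<le> l + k1" using lu by simp
    have "N (E ((a1 * w + a2) / n)) = real q ^ Sq (l + k1 - kn)"
    proof (rule G_big(2))
      show "a1 \<in> AA" "a2 \<in> AA" "n \<in> AA" by (rule A)+
      show "N a1 = real q ^ k1" using Na1 A1 by blast
      show "N n = real q ^ kn" by (rule Nn)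
      show "N a2 < N n" by (rule a2n)
      show "N a2 \<le> N a1 * real q ^ l"
      proof (cases "a2 = 0")
        case True thus ?thesis using N_nonneg[of a1] by simp
      next
        case False
        hence "k2 \<le> k1 + l" using A1 by simp
        hence "real q ^ k2 \<le> real q ^ (k1 + l)" using q_gt1 by (intro power_increasing) auto
        thus ?thesis using Na1 A1 Na2[OF False] by (simp add: power_add)
      qed
      show "k1 < kn" using d1 k1_k2_kn_def by simp
      show "kn \<le> l + k1" by (rule le)
    qed
    hence NE: "N (E u) = real q powr real (Sq (l + k1 - kn))" by (simp add: u_def pow_powr)
    have "real (Sq (l + k1 - kn)) * (real q - 1) = real q * (real q ^ (l + k1 - kn) - 1)"
      using Sq_id[of "l + k1 - kn"] by (simp add: algebra_simps)
    moreover have "real q ^ (l + k1 - kn) = real q powr (real l + real k1 - real kn)"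
      using le by (simp add: pow_powr of_nat_diff)
    ultimately have "real (Sq (l + k1 - kn)) = real q / (real q - 1) * (real q powr (real l + real k1 - real kn) - 1)"
      using q_gt1 by (simp add: field_simps)
    thus "logv q N (E u) = ereal (real q / (real q - 1) * (real q powr (real l + real k1 - real kn) - 1))"
      using logv_powr[OF NE] by simp
  qed
  have P4: "logv q N u < 0 \<longrightarrow> logv q N (E u) = logv q N u"
  proof
    assume lu: "logv q N u < 0"
    hence "log (real q) (N u) < 0" using u0 by (simp add: logv_def)
    hence Nu: "N u < 1" using q_gt1 N_pos[OF u0] by (simp add: log_less_zero_cancel_iff)
    hence NE: "N (E u) = N u" by (rule expL_small)
    have "E u \<noteq> 0"
    proof
      assume "E u = 0"
      hence "N u = 0" using NE by simp
      thus False using N_pos[OF u0] by simp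
    qed
    with NE show "logv q N (E u) = logv q N u" using u0 by (simp add: logv_def)
  qed
  show ?thesis using P1 P2 P3 P4 unfolding Let_def u_def a1_a2_n_def k1_k2_kn_def by simp
qed

end

theorem mainTheorem15:
  fixes q :: nat and absv :: "'c::field \<Rightarrow> real" and T w :: 'c and l :: nat
  assumes C: "is_Cinfty q absv T"
    and w_notin: "w \<notin> Kinf q absv T"
    and w_abs: "absv w = real q ^ l" and w_absi: "abs_i q absv T w = real q ^ l"
  shows "logv q absv (DeltaT q absv T (latt q T w))
           = ereal (real q ^ 2 + real q - real q ^ (l + 1))
     \<and> (\<forall>fn f1 f2 :: 'c poly.
          (\<forall>i. coeff fn i \<in> Fq q) \<and> (\<forall>i. coeff f1 i \<in> Fq q) \<and> (\<forall>i. coeff f2 i \<in> Fq q) \<and>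
          degree fn > 0 \<and> (poly f1 T \<noteq> 0 \<or> poly f2 T \<noteq> 0) \<and>
          degree f1 < degree fn \<and> degree f2 < degree fn \<longrightarrow>
          (let u = (poly f1 T * w + poly f2 T) / poly fn T;
               d1 = real (degree f1); d2 = real (degree f2); dn = real (degree fn) in
           (poly f1 T \<noteq> 0 \<and> (poly f2 T = 0 \<or> d2 \<le> d1 + real l)
              \<longrightarrow> logv q absv u = ereal (real l + d1 - dn)) \<and>
           (poly f2 T \<noteq> 0 \<and> (poly f1 T = 0 \<or> d2 > d1 + real l)
              \<longrightarrow> logv q absv u = ereal (d2 - dn)) \<and>
           (logv q absv u \<ge> 0 \<longrightarrow> logv q absv (expL absv (latt q T w) u)
              = ereal (real q / (real q - 1) * (real q powr (real l + d1 - dn) - 1))) \<and>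
           (logv q absv u < 0 \<longrightarrow> logv q absv (expL absv (latt q T w) u) = logv q absv u)))"
proof -
  interpret cinfw q absv T w l
  proof (unfold_locales)
    show "\<exists>p k. prime p \<and> k > 0 \<and> q = p ^ k" using C by (simp add: is_Cinfty_def)
    show "of_nat q = (0::'c)" using C by (simp add: is_Cinfty_def)
    show "\<And>x. absv x \<ge> 0" using C by (simp add: is_Cinfty_def)
    show "\<And>x. absv x = 0 \<longleftrightarrow> x = 0" using C by (simp add: is_Cinfty_def)
    show "\<And>x y. absv (x * y) = absv x * absv y" using C by (simp add: is_Cinfty_def)
    show "\<And>x y. absv (x + y) \<le> max (absv x) (absv y)" using C by (simp add: is_Cinfty_def)
    show "\<And>X. \<forall>e>0. \<exists>M. \<forall>m\<ge>M. \<forall>n\<ge>M. absv (X m - X n) < e \<Longrightarrow> \<exists>L. conv_to absv X L"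
      using C unfolding is_Cinfty_def by blast
    show "\<And>f::'c poly. 0 < degree f \<Longrightarrow> \<exists>x. poly f x = 0" using C unfolding is_Cinfty_def by blast
    show "absv T = real q" using C by (simp add: is_Cinfty_def)
    show "absv w = real q ^ l" by (rule w_abs)
    show "abs_i q absv T w = real q ^ l" by (rule w_absi)
  qed
  have DD0: "DD \<noteq> 0" using T_nz AAc_nz BBc_nz by (simp add: DD_def)
  have part1: "logv q absv (DeltaT q absv T (latt q T w)) = ereal (real q ^ 2 + real q - real q ^ (l + 1))"
    using DeltaT_val log_Delta DD0 by (simp add: logv_def)
  have part2: "\<forall>fn f1 f2 :: 'c poly.
          (\<forall>i. coeff fn i \<in> Fq q) \<and> (\<forall>i. coeff f1 i \<in> Fq q) \<and> (\<forall>i. coeff f2 i \<in> Fq q) \<and>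
          degree fn > 0 \<and> (poly f1 T \<noteq> 0 \<or> poly f2 T \<noteq> 0) \<and>
          degree f1 < degree fn \<and> degree f2 < degree fn \<longrightarrow>
          (let u = (poly f1 T * w + poly f2 T) / poly fn T;
               d1 = real (degree f1); d2 = real (degree f2); dn = real (degree fn) in
           (poly f1 T \<noteq> 0 \<and> (poly f2 T = 0 \<or> d2 \<le> d1 + real l)
              \<longrightarrow> logv q absv u = ereal (real l + d1 - dn)) \<and>
           (poly f2 T \<noteq> 0 \<and> (poly f1 T = 0 \<or> d2 > d1 + real l)
              \<longrightarrow> logv q absv u = ereal (d2 - dn)) \<and>
           (logv q absv u \<ge> 0 \<longrightarrow> logv q absv (expL absv (latt q T w) u)
              = ereal (real q / (real q - 1) * (real q powr (real l + d1 - dn) - 1))) \<and>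
           (logv q absv u < 0 \<longrightarrow> logv q absv (expL absv (latt q T w) u) = logv q absv u))"
  proof (intro allI impI)
    fix fn f1 f2 :: "'c poly"
    assume h: "(\<forall>i. coeff fn i \<in> Fq q) \<and> (\<forall>i. coeff f1 i \<in> Fq q) \<and> (\<forall>i. coeff f2 i \<in> Fq q) \<and>
          degree fn > 0 \<and> (poly f1 T \<noteq> 0 \<or> poly f2 T \<noteq> 0) \<and>
          degree f1 < degree fn \<and> degree f2 < degree fn"
    show "let u = (poly f1 T * w + poly f2 T) / poly fn T;
               d1 = real (degree f1); d2 = real (degree f2); dn = real (degree fn) in
           (poly f1 T \<noteq> 0 \<and> (poly f2 T = 0 \<or> d2 \<le> d1 + real l)
              \<longrightarrow> logv q absv u = ereal (real l + d1 - dn)) \<and>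
           (poly f2 T \<noteq> 0 \<and> (poly f1 T = 0 \<or> d2 > d1 + real l)
              \<longrightarrow> logv q absv u = ereal (d2 - dn)) \<and>
           (logv q absv u \<ge> 0 \<longrightarrow> logv q absv (expL absv (latt q T w) u)
              = ereal (real q / (real q - 1) * (real q powr (real l + d1 - dn) - 1))) \<and>
           (logv q absv u < 0 \<longrightarrow> logv q absv (expL absv (latt q T w) u) = logv q absv u)"
      by (rule part_ii) (use h in \<open>auto simp: Fqp_def\<close>)
  qed
  show ?thesis using part1 part2 by blast
qed

end
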